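(* Let $x,y\in\{0,1\}^\infty$ be independent sequences, both with randomness rate $\tau>0$; let $0<\sigma<\tau$, $0<\sigma'<\tau-\sigma$, $b=\lceil(1-\sigma)/\sigma'\rceil$, let $a$ be a positive integer, and let $t_0=0$, $t_1=a$, $t_i=b(t_1+\cdots+t_{i-1})$ for $i\ge2$. Let $x_i=x(t_{i-1}+1:t_i)$, $y_i=y(t_{i-1}+1:t_i)$, $\bar{x}_i=x(1:t_i)$, $\bar{y}_i=y(1:t_i)$ (with $\bar{x}_0,\bar{y}_0$ the empty string). Then there is a constant $c$ such that for all $i,j\ge1$: (a) $\big|K(x_i\mid\bar{x}_{i-1}\bar{y}_j)-K(x_i\mid\bar{x}_{i-1})\big|\le c(i+j)$; (b) $\big|K(y_i\mid\bar{x}_j\bar{y}_{i-1})-K(y_i\mid\bar{y}_{i-1})\big|\le c(i+j)$.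
   Context: $x(n_1:n_2)$ denotes bits $n_1$ through $n_2$ of $x$ (indexed from 1); juxtaposition is concatenation, so e.g. $K(u\mid vw)$ conditions on the concatenated string $vw$. $K(u)$, $K(u\mid v)$ are plain and conditional plain Kolmogorov complexity with respect to fixed universal machines. A sequence has randomness rate $\tau$ if $K(x(1:n))\ge\tau n$ for all but finitely many $n$. Sequences $x,y$ are independent if there is a constant $c_0$ with $K(x(1:n)y(1:m))\ge K(x(1:n))+K(y(1:m))-c_0(1+\log n+\log m)$ for all $n,m\ge1$. *)

theory Defs
  imports Complex_Main
begin

datatype recf = Z | S | Proj nat | Comp recf "recf list" | Prec recf recf | Mn recf

inductive eval :: "recf \<Rightarrow> nat list \<Rightarrow> nat \<Rightarrow> bool" where
  ev_Z: "eval Z xs 0"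
| ev_S: "eval S (x # xs) (Suc x)"
| ev_Proj: "eval (Proj i) xs (if i < length xs then xs ! i else 0)"
| ev_Comp: "length ys = length gs \<Longrightarrow> (\<forall>k<length gs. eval (gs ! k) xs (ys ! k))
            \<Longrightarrow> eval f ys y \<Longrightarrow> eval (Comp f gs) xs y"
| ev_Prec0: "eval f xs y \<Longrightarrow> eval (Prec f g) (0 # xs) y"
| ev_PrecS: "eval (Prec f g) (n # xs) r \<Longrightarrow> eval g (n # r # xs) y
            \<Longrightarrow> eval (Prec f g) (Suc n # xs) y"
| ev_Mn: "eval f (y # xs) 0 \<Longrightarrow> (\<forall>z<y. \<exists>v. eval f (z # xs) v \<and> v > 0)
            \<Longrightarrow> eval (Mn f) xs y"

fun enc :: "bool list \<Rightarrow> nat" where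
  "enc [] = 0"
| "enc (b # bs) = 2 * enc bs + (if b then 2 else 1)"

definition computable1 :: "(bool list \<Rightarrow> bool list option) \<Rightarrow> bool" where
  "computable1 F \<longleftrightarrow> (\<exists>r. \<forall>p w. eval r [enc p] (enc w) \<longleftrightarrow> F p = Some w)"

definition computable2 :: "(bool list \<Rightarrow> bool list \<Rightarrow> bool list option) \<Rightarrow> bool" where
  "computable2 F \<longleftrightarrow> (\<exists>r. \<forall>p v w. eval r [enc p, enc v] (enc w) \<longleftrightarrow> F p v = Some w)"

definition universal1 :: "(bool list \<Rightarrow> bool list option) \<Rightarrow> bool" where
  "universal1 U \<longleftrightarrow> computable1 U \<and>
     (\<forall>V. computable1 V \<longrightarrow> (\<exists>c. \<forall>p u. V p = Some u \<longrightarrow>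
        (\<exists>q. U q = Some u \<and> length q \<le> length p + c)))"

definition universal2 :: "(bool list \<Rightarrow> bool list \<Rightarrow> bool list option) \<Rightarrow> bool" where
  "universal2 U \<longleftrightarrow> computable2 U \<and>
     (\<forall>V. computable2 V \<longrightarrow> (\<exists>c. \<forall>p v u. V p v = Some u \<longrightarrow>
        (\<exists>q. U q v = Some u \<and> length q \<le> length p + c)))"

definition KP :: "(bool list \<Rightarrow> bool list option) \<Rightarrow> bool list \<Rightarrow> nat" where
  "KP U u = (LEAST n. \<exists>p. length p = n \<and> U p = Some u)"

definition KC :: "(bool list \<Rightarrow> bool list \<Rightarrow> bool list option) \<Rightarrow> bool list \<Rightarrow> bool list \<Rightarrow> nat" where
  "KC U u v = (LEAST n. \<exists>p. length p = n \<and> U p v = Some u)"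

text \<open>An infinite binary sequence is \<open>x :: nat \<Rightarrow> bool\<close>, bits indexed from 1
  (the value \<open>x 0\<close> is never used). \<open>seg x n1 n2\<close> is \<open>x(n1:n2)\<close>.\<close>

definition seg :: "(nat \<Rightarrow> bool) \<Rightarrow> nat \<Rightarrow> nat \<Rightarrow> bool list" where
  "seg x n1 n2 = map x [n1..<Suc n2]"

definition rand_rate :: "(bool list \<Rightarrow> bool list option) \<Rightarrow> real \<Rightarrow> (nat \<Rightarrow> bool) \<Rightarrow> bool" where
  "rand_rate U \<tau> x \<longleftrightarrow> (\<forall>\<^sub>F n in sequentially. real (KP U (seg x 1 n)) \<ge> \<tau> * real n)"

definition indep :: "(bool list \<Rightarrow> bool list option) \<Rightarrow> (nat \<Rightarrow> bool) \<Rightarrow> (nat \<Rightarrow> bool) \<Rightarrow> bool" where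
  "indep U x y \<longleftrightarrow> (\<exists>c0. \<forall>n\<ge>1. \<forall>m\<ge>1.
     real (KP U (seg x 1 n @ seg y 1 m)) \<ge>
       real (KP U (seg x 1 n)) + real (KP U (seg y 1 m))
       - c0 * (1 + log 2 (real n) + log 2 (real m)))"

fun tb :: "nat \<Rightarrow> nat \<Rightarrow> nat \<Rightarrow> nat" where
  "tb a b 0 = 0"
| "tb a b (Suc 0) = a"
| "tb a b (Suc (Suc k)) = b * (\<Sum>l\<in>{1..Suc k}. tb a b l)"

end

theory Submission
  imports Defs
begin

inductive_cases evZE: "eval Z xs y"
inductive_cases evSE: "eval S xs y"
inductive_cases evProjE: "eval (Proj i) xs y"
inductive_cases evCompE: "eval (Comp f gs) xs y"
inductive_cases evPrec0E: "eval (Prec f g) (0 # xs) y"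
inductive_cases evPrecSE: "eval (Prec f g) (Suc n # xs) y"
inductive_cases evMnE: "eval (Mn f) xs y"
lemma eval_det: "eval r xs y \<Longrightarrow> eval r xs y' \<Longrightarrow> y = y'"
proof (induction arbitrary: y' rule: eval.induct)
  case (ev_Z xs) from ev_Z.prems show ?case by (rule evZE) simp
next
  case (ev_S x xs) from ev_S.prems show ?case by (rule evSE) simp
next
  case (ev_Proj i xs) from ev_Proj.prems show ?case by (rule evProjE) simp
next
  case (ev_Comp ys gs xs f y)
  from ev_Comp.prems obtain ys' where h: "length ys' = length gs" "\<forall>k<length gs. eval (gs ! k) xs (ys' ! k)" "eval f ys' y'"
    by (rule evCompE)
  have "ys' = ys"
  proof (rule nth_equalityI)
    show "length ys' = length ys" using ev_Comp(1) h(1) by simp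
    fix k assume "k < length ys'"
    then have kk: "k < length gs" using h(1) by simp
    have "eval (gs ! k) xs (ys' ! k)" using h(2) kk by blast
    have "eval (gs ! k) xs (ys ! k) \<and> (\<forall>y'. eval (gs ! k) xs y' \<longrightarrow> ys ! k = y')" by (rule mp[OF spec[OF ev_Comp.IH(1), of k] kk])
    then have "\<forall>y'. eval (gs ! k) xs y' \<longrightarrow> ys ! k = y'" by (rule conjunct2)
    then have "ys ! k = ys' ! k" using \<open>eval (gs ! k) xs (ys' ! k)\<close> by (metis)
    then show "ys' ! k = ys ! k" by (rule sym)
  qed
  then show ?case using ev_Comp.IH(2) h(3) by simp
next
  case (ev_Prec0 f xs y g) from ev_Prec0.prems show ?case by (rule evPrec0E) (use ev_Prec0.IH in blast)
next
  case (ev_PrecS f g n xs r y)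
  from ev_PrecS.prems obtain r' where "eval (Prec f g) (n # xs) r'" "eval g (n # r' # xs) y'"
    by (rule evPrecSE)
  then show ?case using ev_PrecS.IH by simp
next
  case (ev_Mn f y xs)
  from ev_Mn.prems have h1: "eval f (y' # xs) 0" by (rule evMnE)
  from ev_Mn.prems have h2: "\<forall>z<y'. \<exists>v. eval f (z # xs) v \<and> v > 0" by (rule evMnE)
  show ?case
  proof (rule ccontr)
    assume "y \<noteq> y'"
    then consider "y < y'" | "y' < y" by linarith
    then show False
    proof cases
      case 1 then obtain v where v: "eval f (y # xs) v" "v > 0" using h2 by blast
      have "\<forall>x. eval f (y # xs) x \<longrightarrow> 0 = x" using ev_Mn.IH(1) by simp
      then have "0 = v" using v(1) by metis
      then show False using v(2) by simp
    next
      case 2 then obtain v where v: "eval f (y' # xs) v \<and> (\<forall>x. eval f (y' # xs) x \<longrightarrow> v = x)" "v > 0"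
        using ev_Mn.IH(2) by metis
      then have "v = 0" using h1 by metis
      then show False using v(2) by simp
    qed
  qed
qed

definition pf :: "nat \<Rightarrow> (nat list \<Rightarrow> nat option) \<Rightarrow> bool" where
  "pf n F \<longleftrightarrow> (\<exists>r. \<forall>xs. length xs = n \<longrightarrow> (\<forall>y. eval r xs y \<longleftrightarrow> F xs = Some y))"

abbreviation tf :: "nat \<Rightarrow> (nat list \<Rightarrow> nat) \<Rightarrow> bool" where
  "tf n f \<equiv> pf n (\<lambda>xs. Some (f xs))"

lemma pf_cong: "pf n F \<Longrightarrow> (\<And>xs. length xs = n \<Longrightarrow> F xs = G xs) \<Longrightarrow> pf n G"
  unfolding pf_def by metis

lemma tf_cong: "tf n f \<Longrightarrow> (\<And>xs. length xs = n \<Longrightarrow> f xs = g xs) \<Longrightarrow> tf n g"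
  by (erule pf_cong) simp

lemma tf_I: "(\<And>xs. length xs = n \<Longrightarrow> eval r xs (f xs)) \<Longrightarrow> tf n f"
  unfolding pf_def by (metis eval_det option.inject)

fun cn :: "nat \<Rightarrow> recf" where
  "cn 0 = Z" | "cn (Suc c) = Comp S [cn c]"

lemma eval_cn: "eval (cn c) xs c"
proof (induction c)
  case 0 then show ?case by (simp add: ev_Z)
next
  case (Suc c)
  have "eval S [c] (Suc c)" by (rule ev_S)
  then have "eval (Comp S [cn c]) xs (Suc c)" using Suc by (intro ev_Comp[of "[c]"]) (simp_all add: less_Suc_eq)
  then show ?case by simp
qed

lemma tf_const: "tf n (\<lambda>xs. c)"
  by (rule tf_I[of _ "cn c"]) (rule eval_cn)

lemma tf_proj: "i < n \<Longrightarrow> tf n (\<lambda>xs. xs ! i)"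
  by (rule tf_I[of _ "Proj i"]) (metis ev_Proj)

lemma tf_S1: "tf 1 (\<lambda>xs. Suc (xs ! 0))"
proof (rule tf_I[of _ S])
  fix xs :: "nat list" assume "length xs = 1"
  then obtain x where "xs = [x]" by (metis One_nat_def length_0_conv length_Suc_conv)
  then show "eval S xs (Suc (xs ! 0))" by (simp add: ev_S)
qed

lemma recf_list:
  assumes "\<forall>G\<in>set Gs. pf n G"
  shows "\<exists>rs. length rs = length Gs \<and> (\<forall>k<length Gs. \<forall>xs. length xs = n \<longrightarrow> (\<forall>y. eval (rs!k) xs y \<longleftrightarrow> (Gs!k) xs = Some y))"
  using assms
proof (induction Gs)
  case Nil then show ?case by simp
next
  case (Cons G Gs)
  then obtain rs where rs: "length rs = length Gs" "\<forall>k<length Gs. \<forall>xs. length xs = n \<longrightarrow> (\<forall>y. eval (rs!k) xs y \<longleftrightarrow> (Gs!k) xs = Some y)" by auto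
  from Cons.prems obtain r where r: "\<forall>xs. length xs = n \<longrightarrow> (\<forall>y. eval r xs y \<longleftrightarrow> G xs = Some y)" unfolding pf_def by auto
  show ?case
  proof (intro exI[of _ "r # rs"] conjI allI impI)
    show "length (r # rs) = length (G # Gs)" using rs by simp
    fix k and xs :: "nat list" and y assume "k < length (G # Gs)" "length xs = n"
    then show "eval ((r # rs) ! k) xs y \<longleftrightarrow> ((G # Gs) ! k) xs = Some y"
      using rs r by (cases k) auto
  qed
qed

lemma pf_comp:
  assumes F: "pf m F" and len: "length Gs = m" and G: "\<forall>G\<in>set Gs. pf n G"
  shows "pf n (\<lambda>xs. if (\<forall>G\<in>set Gs. G xs \<noteq> None) then F (map (\<lambda>G. the (G xs)) Gs) else None)"
proof -
  obtain rs where rs: "length rs = length Gs" "\<forall>k<length Gs. \<forall>xs. length xs = n \<longrightarrow> (\<forall>y. eval (rs!k) xs y \<longleftrightarrow> (Gs!k) xs = Some y)"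
    using recf_list[OF G] by blast
  obtain rF where rF: "\<forall>xs. length xs = m \<longrightarrow> (\<forall>y. eval rF xs y \<longleftrightarrow> F xs = Some y)"
    using F unfolding pf_def by blast
  show ?thesis unfolding pf_def
  proof (intro exI[of _ "Comp rF rs"] allI impI)
    fix xs :: "nat list" and y assume xs: "length xs = n"
    show "eval (Comp rF rs) xs y \<longleftrightarrow> (if (\<forall>G\<in>set Gs. G xs \<noteq> None) then F (map (\<lambda>G. the (G xs)) Gs) else None) = Some y"
    proof
      assume "eval (Comp rF rs) xs y"
      then obtain ys where ys: "length ys = length rs" "\<forall>k<length rs. eval (rs ! k) xs (ys ! k)" "eval rF ys y"
        by (rule evCompE)
      have gk: "\<forall>k<length Gs. (Gs!k) xs = Some (ys!k)" using ys(2) rs xs by auto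
      have all: "\<forall>G\<in>set Gs. G xs \<noteq> None" using gk by (metis in_set_conv_nth option.distinct(1))
      have "map (\<lambda>G. the (G xs)) Gs = ys"
        by (rule nth_equalityI) (use ys(1) rs(1) gk in auto)
      then show "(if (\<forall>G\<in>set Gs. G xs \<noteq> None) then F (map (\<lambda>G. the (G xs)) Gs) else None) = Some y"
        using all ys(3) rF ys(1) rs(1) len by auto
    next
      assume h: "(if (\<forall>G\<in>set Gs. G xs \<noteq> None) then F (map (\<lambda>G. the (G xs)) Gs) else None) = Some y"
      then have all: "\<forall>G\<in>set Gs. G xs \<noteq> None" by (metis option.distinct(1))
      with h have Fy: "F (map (\<lambda>G. the (G xs)) Gs) = Some y" by simp
      let ?ys = "map (\<lambda>G. the (G xs)) Gs"
      have "\<forall>k<length rs. eval (rs ! k) xs (?ys ! k)"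
        using rs xs all by (auto simp: nth_mem)
      moreover have "eval rF ?ys y" using rF Fy len by simp
      ultimately show "eval (Comp rF rs) xs y"
        by (intro ev_Comp) (use rs(1) in auto)
    qed
  qed
qed

lemma tf_comp:
  assumes "tf m f" "length gs = m" "\<forall>g\<in>set gs. tf n g"
  shows "tf n (\<lambda>xs. f (map (\<lambda>g. g xs) gs))"
proof -
  have "pf n (\<lambda>xs. if (\<forall>G\<in>set (map (\<lambda>g xs. Some (g xs)) gs). G xs \<noteq> None)
      then Some (f (map (\<lambda>G. the (G xs)) (map (\<lambda>g xs. Some (g xs)) gs))) else None)"
    by (rule pf_comp) (use assms in auto)
  then show ?thesis by (rule pf_cong) (simp add: comp_def)
qed

lemma pf_comp_tot:
  assumes "pf m F" "length gs = m" "\<forall>g\<in>set gs. tf n g"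
  shows "pf n (\<lambda>xs. F (map (\<lambda>g. g xs) gs))"
proof -
  have "pf n (\<lambda>xs. if (\<forall>G\<in>set (map (\<lambda>g xs. Some (g xs)) gs). G xs \<noteq> None)
      then F (map (\<lambda>G. the (G xs)) (map (\<lambda>g xs. Some (g xs)) gs)) else None)"
    by (rule pf_comp) (use assms in auto)
  then show ?thesis by (rule pf_cong) (simp add: comp_def)
qed

lemma tf_Suc: "tf n f \<Longrightarrow> tf n (\<lambda>xs. Suc (f xs))"
  using tf_comp[OF tf_S1, of "[f]" n] by simp

lemma map_nth_upt: "length xs = n \<Longrightarrow> map (\<lambda>i. xs ! i) [0..<n] = xs"
  by (metis map_nth)

lemma tf_projs: "\<forall>g\<in>set (map (\<lambda>i xs. xs ! i) [0..<n]). tf n g"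
  by (auto intro: tf_proj)

lemma eval_prec_val:
  assumes f: "\<forall>ys. length ys = n \<longrightarrow> eval rf ys (f ys)"
    and g: "\<forall>ys. length ys = Suc (Suc n) \<longrightarrow> eval rg ys (g ys)"
    and ys: "length ys = n"
  shows "eval (Prec rf rg) (k # ys) (rec_nat (f ys) (\<lambda>i acc. g (i # acc # ys)) k)"
proof (induction k)
  case 0 then show ?case using f ys by (simp add: ev_Prec0)
next
  case (Suc k)
  then show ?case using g ys by (auto intro: ev_PrecS)
qed

lemma tf_prec0:
  assumes "tf n f" "tf (Suc (Suc n)) g"
  shows "tf (Suc n) (\<lambda>xs. rec_nat (f (tl xs)) (\<lambda>i acc. g (i # acc # tl xs)) (hd xs))"
proof -
  obtain rf where rf: "\<forall>xs. length xs = n \<longrightarrow> eval rf xs (f xs)" using assms(1) unfolding pf_def by blast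
  obtain rg where rg: "\<forall>xs. length xs = Suc (Suc n) \<longrightarrow> eval rg xs (g xs)" using assms(2) unfolding pf_def by blast
  show ?thesis
  proof (rule tf_I[of _ "Prec rf rg"])
    fix xs :: "nat list" assume "length xs = Suc n"
    then obtain k ys where "xs = k # ys" "length ys = n" by (metis length_Suc_conv)
    then show "eval (Prec rf rg) xs (rec_nat (f (tl xs)) (\<lambda>i acc. g (i # acc # tl xs)) (hd xs))"
      using eval_prec_val[OF rf rg] by simp
  qed
qed

lemma tf_rec:
  assumes "tf n k" "tf n z" "tf (Suc (Suc n)) st"
  shows "tf n (\<lambda>xs. rec_nat (z xs) (\<lambda>i acc. st (i # acc # xs)) (k xs))"
proof -
  have "tf n (\<lambda>xs. (\<lambda>ys. rec_nat (z (tl ys)) (\<lambda>i acc. st (i # acc # tl ys)) (hd ys)) (map (\<lambda>g. g xs) (k # map (\<lambda>i xs. xs ! i) [0..<n])))"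
    by (rule tf_comp[OF tf_prec0[OF assms(2,3)]]) (use assms(1) tf_projs in auto)
  then show ?thesis by (rule tf_cong) (simp add: comp_def map_nth_upt)
qed

lemma pf_mn0:
  assumes "tf (Suc n) f"
  shows "pf n (\<lambda>xs. if \<exists>y. f (y # xs) = 0 then Some (LEAST y. f (y # xs) = 0) else None)"
proof -
  obtain rf where rf: "\<forall>xs. length xs = Suc n \<longrightarrow> (\<forall>y. eval rf xs y \<longleftrightarrow> f xs = y)" using assms unfolding pf_def by auto
  show ?thesis unfolding pf_def
  proof (intro exI[of _ "Mn rf"] allI impI)
    fix xs :: "nat list" and y assume xs: "length xs = n"
    have e: "\<And>z v. eval rf (z # xs) v \<longleftrightarrow> f (z # xs) = v" using rf xs by simp
    show "eval (Mn rf) xs y \<longleftrightarrow> (if \<exists>y. f (y # xs) = 0 then Some (LEAST y. f (y # xs) = 0) else None) = Some y"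
    proof
      assume "eval (Mn rf) xs y"
      then have h: "eval rf (y # xs) 0" "\<forall>z<y. \<exists>v. eval rf (z # xs) v \<and> v > 0" by (rule evMnE, blast)+
      then have a: "f (y # xs) = 0" "\<forall>z<y. f (z # xs) \<noteq> 0" using e by auto
      then have "(LEAST y. f (y # xs) = 0) = y"
        by (intro Least_equality) (auto simp: not_less[symmetric])
      then show "(if \<exists>y. f (y # xs) = 0 then Some (LEAST y. f (y # xs) = 0) else None) = Some y" using a by auto
    next
      assume h: "(if \<exists>y. f (y # xs) = 0 then Some (LEAST y. f (y # xs) = 0) else None) = Some y"
      then have ex: "\<exists>y. f (y # xs) = 0" by (metis option.distinct(1))
      with h have y: "y = (LEAST y. f (y # xs) = 0)" by simp
      have "f (y # xs) = 0" using y ex by (metis (mono_tags, lifting) LeastI)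
      moreover have "\<forall>z<y. f (z # xs) \<noteq> 0" using y not_less_Least by blast
      ultimately show "eval (Mn rf) xs y" using e by (intro ev_Mn) auto
    qed
  qed
qed

lemma hd_nth0: "length xs = Suc n \<Longrightarrow> xs ! 0 = hd xs"
  by (cases xs) auto

lemma tf_reidx:
  assumes "tf n f" "length idx = n" "\<forall>i\<in>set idx. i < m"
  shows "tf m (\<lambda>ys. f (map (\<lambda>i. ys ! i) idx))"
proof -
  have "tf m (\<lambda>ys. f (map (\<lambda>g. g ys) (map (\<lambda>i ys. ys ! i) idx)))"
    by (rule tf_comp[OF assms(1)]) (use assms(2,3) in \<open>auto intro: tf_proj\<close>)
  then show ?thesis by (simp add: comp_def)
qed

lemma tf_drop:
  assumes "tf n a"
  shows "tf (m + n) (\<lambda>ys. a (drop m ys))"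
proof -
  have "tf (m + n) (\<lambda>ys. a (map (\<lambda>i. ys ! i) (map (\<lambda>i. m + i) [0..<n])))"
    by (rule tf_reidx[OF assms]) auto
  then show ?thesis
  proof (rule tf_cong)
    fix ys :: "nat list" assume "length ys = m + n"
    then have "map (\<lambda>i. ys ! i) (map (\<lambda>i. m + i) [0..<n]) = drop m ys"
      by (intro nth_equalityI) auto
    then show "a (map (\<lambda>i. ys ! i) (map (\<lambda>i. m + i) [0..<n])) = a (drop m ys)" by simp
  qed
qed

lemma tf_drop1: "tf n a \<Longrightarrow> tf (Suc n) (\<lambda>ys. a (tl ys))"
  using tf_drop[of n a 1] by (simp add: drop_Suc)

lemma tf_drop2: "tf n a \<Longrightarrow> tf (Suc (Suc n)) (\<lambda>ys. a (drop 2 ys))"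
  using tf_drop[of n a 2] by simp

lemma rec_add: "rec_nat x (\<lambda>i acc. Suc acc) k = x + k"
  by (induction k) auto

lemma tf_add: "tf n a \<Longrightarrow> tf n b \<Longrightarrow> tf n (\<lambda>xs. a xs + b xs)"
  using tf_rec[of n b a "\<lambda>ys. Suc (ys ! 1)"] tf_Suc[OF tf_proj[of 1 "Suc (Suc n)"]]
  by (simp add: rec_add)

lemma rec_pred: "rec_nat 0 (\<lambda>i acc. i) k = k - 1"
  by (cases k) auto

lemma tf_pred: "tf n a \<Longrightarrow> tf n (\<lambda>xs. a xs - 1)"
  using tf_rec[of n a "\<lambda>xs. 0" "\<lambda>ys. ys ! 0"] tf_const tf_proj[of 0 "Suc (Suc n)"]
  by (simp add: rec_pred)

lemma rec_sub: "rec_nat x (\<lambda>i acc. acc - Suc 0) k = x - k"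
  by (induction k) auto

lemma tf_sub: "tf n a \<Longrightarrow> tf n b \<Longrightarrow> tf n (\<lambda>xs. a xs - b xs)"
proof -
  assume a: "tf n a" and b: "tf n b"
  have "tf n (\<lambda>xs. rec_nat (a xs) (\<lambda>i acc. (i # acc # xs) ! 1 - 1) (b xs))"
    by (intro tf_rec[OF b a] tf_pred tf_proj) simp
  then show ?thesis by (rule tf_cong) (simp add: rec_sub)
qed


lemma rec_mult: "rec_nat 0 (\<lambda>i acc. acc + x) k = k * x"
  by (induction k) auto

lemma tf_mult: "tf n a \<Longrightarrow> tf n b \<Longrightarrow> tf n (\<lambda>xs. a xs * b xs)"
proof -
  assume a: "tf n a" and b: "tf n b"
  have "tf (Suc (Suc n)) (\<lambda>ys. ys ! 1 + a (drop 2 ys))"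
    by (rule tf_add[OF tf_proj tf_drop2[OF a]]) simp
  then have "tf n (\<lambda>xs. rec_nat 0 (\<lambda>i acc. (i # acc # xs) ! 1 + a (drop 2 (i # acc # xs))) (b xs))"
    by (intro tf_rec[OF b tf_const])
  then show ?thesis by (rule tf_cong) (simp add: rec_mult mult.commute)
qed

lemma rec_ifz: "rec_nat x (\<lambda>i acc. y) k = (if k = 0 then x else y)"
  by (cases k) auto

lemma tf_ifz: "tf n c \<Longrightarrow> tf n a \<Longrightarrow> tf n b \<Longrightarrow> tf n (\<lambda>xs. if c xs = 0 then a xs else b xs)"
proof -
  assume c: "tf n c" and a: "tf n a" and b: "tf n b"
  have "tf n (\<lambda>xs. rec_nat (a xs) (\<lambda>i acc. b (drop 2 (i # acc # xs))) (c xs))"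
    by (intro tf_rec[OF c a tf_drop2[OF b]])
  then show ?thesis by (rule tf_cong) (simp add: rec_ifz)
qed

lemma tf_if: "tf n (\<lambda>xs. if P xs then 1 else 0) \<Longrightarrow> tf n a \<Longrightarrow> tf n b \<Longrightarrow> tf n (\<lambda>xs. if P xs then a xs else b xs)"
proof -
  assume p: "tf n (\<lambda>xs. if P xs then 1 else 0)" and a: "tf n a" and b: "tf n b"
  have "tf n (\<lambda>xs. if (if P xs then 1 else 0) = (0::nat) then b xs else a xs)" by (rule tf_ifz[OF p b a])
  then show ?thesis by (rule tf_cong) simp
qed

lemma tp_le: "tf n a \<Longrightarrow> tf n b \<Longrightarrow> tf n (\<lambda>xs. if a xs \<le> b xs then 1 else 0)"
proof -
  assume a: "tf n a" and b: "tf n b"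
  have "tf n (\<lambda>xs. if a xs - b xs = 0 then 1 else 0)" by (rule tf_ifz[OF tf_sub[OF a b] tf_const tf_const])
  then show ?thesis by (rule tf_cong) simp
qed

lemma tp_less: "tf n a \<Longrightarrow> tf n b \<Longrightarrow> tf n (\<lambda>xs. if a xs < b xs then 1 else 0)"
  using tp_le[OF tf_Suc] by (simp add: Suc_le_eq)

lemma tp_eq: "tf n a \<Longrightarrow> tf n b \<Longrightarrow> tf n (\<lambda>xs. if a xs = b xs then 1 else 0)"
proof -
  assume a: "tf n a" and b: "tf n b"
  have "tf n (\<lambda>xs. if (a xs - b xs) + (b xs - a xs) = 0 then 1 else 0)"
    by (intro tf_ifz tf_add tf_sub a b tf_const)
  then show ?thesis by (rule tf_cong) auto
qed

lemma tp_not: "tf n (\<lambda>xs. if P xs then 1 else 0) \<Longrightarrow> tf n (\<lambda>xs. if \<not> P xs then 1 else 0)"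
proof -
  assume p: "tf n (\<lambda>xs. if P xs then 1 else 0)"
  have "tf n (\<lambda>xs. if P xs then 0 else 1)" by (rule tf_if[OF p tf_const tf_const])
  then show ?thesis by (rule tf_cong) simp
qed

lemma tp_and: "tf n (\<lambda>xs. if P xs then 1 else 0) \<Longrightarrow> tf n (\<lambda>xs. if Q xs then 1 else 0) \<Longrightarrow> tf n (\<lambda>xs. if P xs \<and> Q xs then 1 else 0)"
proof -
  assume p: "tf n (\<lambda>xs. if P xs then 1 else 0)" and q: "tf n (\<lambda>xs. if Q xs then 1 else 0)"
  have "tf n (\<lambda>xs. if P xs then (if Q xs then 1 else 0) else 0)" by (rule tf_if[OF p q tf_const])
  then show ?thesis by (rule tf_cong) simp
qed

lemma tp_or: "tf n (\<lambda>xs. if P xs then 1 else 0) \<Longrightarrow> tf n (\<lambda>xs. if Q xs then 1 else 0) \<Longrightarrow> tf n (\<lambda>xs. if P xs \<or> Q xs then 1 else 0)"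
proof -
  assume p: "tf n (\<lambda>xs. if P xs then 1 else 0)" and q: "tf n (\<lambda>xs. if Q xs then 1 else 0)"
  have "tf n (\<lambda>xs. if P xs then 1 else (if Q xs then 1 else 0))" by (rule tf_if[OF p tf_const q])
  then show ?thesis by (rule tf_cong) simp
qed



lemma rec_pow: "rec_nat (c::nat) (\<lambda>i acc. acc * x) k = c * x ^ k"
  by (induction k) (auto simp: power_Suc2)

lemma tf_pow: "tf n a \<Longrightarrow> tf n b \<Longrightarrow> tf n (\<lambda>xs. a xs ^ b xs)"
proof -
  assume a: "tf n a" and b: "tf n b"
  have "tf (Suc (Suc n)) (\<lambda>ys. ys ! 1 * a (drop 2 ys))"
    by (rule tf_mult[OF tf_proj tf_drop2[OF a]]) simp
  then have "tf n (\<lambda>xs. rec_nat 1 (\<lambda>i acc. (i # acc # xs) ! 1 * a (drop 2 (i # acc # xs))) (b xs))"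
    by (intro tf_rec[OF b tf_const])
  then show ?thesis by (rule tf_cong) (simp add: rec_pow)
qed

lemma pf_search:
  assumes "tf (Suc n) (\<lambda>ys. if P (hd ys) (tl ys) then 0 else 1)"
  shows "pf n (\<lambda>xs. if \<exists>y. P y xs then Some (LEAST y. P y xs) else None)"
  using pf_mn0[OF assms] by (rule pf_cong) simp

lemma tf_search:
  assumes "tf (Suc n) (\<lambda>ys. if P (hd ys) (tl ys) then 0 else 1)"
    and "\<And>xs. length xs = n \<Longrightarrow> \<exists>y. P y xs"
  shows "tf n (\<lambda>xs. LEAST y. P y xs)"
  using pf_search[OF assms(1)] by (rule pf_cong) (use assms(2) in auto)

lemma tf_search':
  assumes "tf (Suc n) (\<lambda>ys. if P (hd ys) (tl ys) then 1 else 0)"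
    and "\<And>xs. length xs = n \<Longrightarrow> \<exists>y. P y xs"
  shows "tf n (\<lambda>xs. LEAST y. P y xs)"
  by (rule tf_search[OF _ assms(2)]) (rule tf_if[OF assms(1) tf_const tf_const])

lemma pf_search':
  assumes "tf (Suc n) (\<lambda>ys. if P (hd ys) (tl ys) then 1 else 0)"
  shows "pf n (\<lambda>xs. if \<exists>y. P y xs then Some (LEAST y. P y xs) else None)"
  by (rule pf_search) (rule tf_if[OF assms(1) tf_const tf_const])

lemma div_least: "(b::nat) > 0 \<Longrightarrow> (LEAST q. a < Suc q * b) = a div b"
proof (rule Least_equality)
  assume "b > 0"
  show "a < Suc (a div b) * b" using \<open>b > 0\<close>
    by (metis add.commute div_mult_mod_eq mod_less_divisor mult_Suc nat_add_left_cancel_less)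
  fix y assume "a < Suc y * b"
  then show "a div b \<le> y" using \<open>b > 0\<close>
    by (metis less_Suc_eq_le less_mult_imp_div_less)
qed

lemma lt_helper: "0 < (b::nat) \<Longrightarrow> a < b + a * b"
  by (induction a) auto

lemma tf_div: "tf n a \<Longrightarrow> tf n b \<Longrightarrow> tf n (\<lambda>xs. a xs div b xs)"
proof -
  assume a: "tf n a" and b: "tf n b"
  have "tf n (\<lambda>xs. LEAST q. b xs = 0 \<or> a xs < Suc q * b xs)"
  proof (rule tf_search'[where P = "\<lambda>q xs. b xs = 0 \<or> a xs < Suc q * b xs"])
    show "tf (Suc n) (\<lambda>ys. if b (tl ys) = 0 \<or> a (tl ys) < Suc (hd ys) * b (tl ys) then 1 else 0)"
    proof (intro tp_or tp_eq tp_less tf_mult tf_Suc tf_drop1 a b tf_const)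
      show "tf (Suc n) hd" by (rule tf_cong[OF tf_proj[of 0]]) (auto simp: hd_nth0)
    qed
    fix xs show "\<exists>q. b xs = 0 \<or> a xs < Suc q * b xs"
      by (cases "b xs = 0") (auto intro!: exI[of _ "a xs"] simp: lt_helper)
  qed
  then show ?thesis
  proof (rule tf_cong)
    fix xs :: "nat list"
    show "(LEAST q. b xs = 0 \<or> a xs < Suc q * b xs) = a xs div b xs"
    proof (cases "b xs = 0")
      case True then show ?thesis by simp
    next
      case False then show ?thesis using div_least[of "b xs" "a xs"] by simp
    qed
  qed
qed

lemma tf_mod: "tf n a \<Longrightarrow> tf n b \<Longrightarrow> tf n (\<lambda>xs. a xs mod b xs)"
proof -
  assume a: "tf n a" and b: "tf n b"
  have "tf n (\<lambda>xs. a xs - b xs * (a xs div b xs))" by (intro tf_sub tf_mult tf_div a b)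
  then show ?thesis by (rule tf_cong) (simp add: minus_mult_div_eq_mod)
qed

lemma tf_hd: "tf (Suc n) hd"
  by (rule tf_cong[OF tf_proj[of 0]]) (auto simp: hd_nth0)

lemma tf_sum:
  assumes k: "tf n k" and f: "tf (Suc n) f"
  shows "tf n (\<lambda>xs. \<Sum>t<k xs. f (t # xs))"
proof -
  have f2: "tf (Suc (Suc n)) (\<lambda>ys. f (hd ys # drop 2 ys))"
  proof -
    have "tf (Suc (Suc n)) (\<lambda>ys. f (map (\<lambda>i. ys ! i) (0 # map (\<lambda>i. i + 2) [0..<n])))"
      by (rule tf_reidx[OF f]) auto
    then show ?thesis
    proof (rule tf_cong)
      fix ys :: "nat list" assume "length ys = Suc (Suc n)"
      then have "map (\<lambda>i. ys ! i) (0 # map (\<lambda>i. i + 2) [0..<n]) = hd ys # drop 2 ys"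
        by (intro nth_equalityI) (auto simp: nth_Cons' hd_nth0)
      then show "f (map (\<lambda>i. ys ! i) (0 # map (\<lambda>i. i + 2) [0..<n])) = f (hd ys # drop 2 ys)" by simp
    qed
  qed
  have "tf n (\<lambda>xs. rec_nat 0 (\<lambda>i acc. (i # acc # xs) ! 1 + f (hd (i # acc # xs) # drop 2 (i # acc # xs))) (k xs))"
    by (intro tf_rec[OF k tf_const] tf_add[OF tf_proj f2]) simp
  moreover have "\<And>xs m. rec_nat 0 (\<lambda>i acc. acc + f (i # xs)) m = (\<Sum>t<m. f (t # xs))"
    by (induct_tac m) auto
  ultimately show ?thesis by (elim tf_cong) simp
qed

lemma pf_bind:
  assumes A: "pf n A" and B: "pf (Suc n) B"
  shows "pf n (\<lambda>xs. case A xs of None \<Rightarrow> None | Some a \<Rightarrow> B (a # xs))"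
proof -
  let ?Gs = "A # map (\<lambda>i xs. Some (xs ! i)) [0..<n]"
  have "pf n (\<lambda>xs. if (\<forall>G\<in>set ?Gs. G xs \<noteq> None) then B (map (\<lambda>G. the (G xs)) ?Gs) else None)"
    by (rule pf_comp[OF B]) (use A in \<open>auto intro: tf_proj\<close>)
  then show ?thesis
  proof (rule pf_cong)
    fix xs :: "nat list" assume "length xs = n"
    then show "(if (\<forall>G\<in>set ?Gs. G xs \<noteq> None) then B (map (\<lambda>G. the (G xs)) ?Gs) else None) =
       (case A xs of None \<Rightarrow> None | Some a \<Rightarrow> B (a # xs))"
      by (cases "A xs") (auto simp: comp_def map_nth_upt)
  qed
qed

lemma pf_tf: "tf n f \<Longrightarrow> pf n (\<lambda>xs. Some (f xs))" by assumption

inductive_cases evPrecE: "eval (Prec f g) xs y"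

definition mnst :: "(nat \<Rightarrow> nat option) \<Rightarrow> nat \<Rightarrow> nat" where
  "mnst P m = rec_nat 0 (\<lambda>z st. if st \<noteq> 0 then st else (case P z of None \<Rightarrow> 1 | Some v \<Rightarrow> if v = 0 then z + 2 else 0)) m"

lemma mnst_0[simp]: "mnst P 0 = 0" by (simp add: mnst_def)
lemma mnst_Suc: "mnst P (Suc m) = (if mnst P m \<noteq> 0 then mnst P m else (case P m of None \<Rightarrow> 1 | Some v \<Rightarrow> if v = 0 then m + 2 else 0))"
  by (simp add: mnst_def)

lemma mnst_char: "mnst P m = y + 2 \<longleftrightarrow> (y < m \<and> P y = Some 0 \<and> (\<forall>z<y. \<exists>v>0. P z = Some v))"
proof (induction m)
  case 0 then show ?case by simp
next
  case (Suc m)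
  show ?case
  proof (cases "mnst P m = 0")
    case True
    then have notf: "\<not> (y < m \<and> P y = Some 0 \<and> (\<forall>z<y. \<exists>v>0. P z = Some v))" using Suc.IH by simp
    have fine: "\<forall>z<m. \<exists>v>0. P z = Some v"
    proof (rule ccontr)
      assume "\<not> (\<forall>z<m. \<exists>v>0. P z = Some v)"
      then obtain z where z: "z < m" "\<not> (\<exists>v>0. P z = Some v)" by blast
      define z0 where "z0 = (LEAST z. z < m \<and> \<not> (\<exists>v>0. P z = Some v))"
      have z0: "z0 < m" "\<not> (\<exists>v>0. P z0 = Some v)" using z LeastI[of "\<lambda>z. z < m \<and> \<not> (\<exists>v>0. P z = Some v)" z]
        unfolding z0_def by blast+
      have before: "\<forall>w<z0. \<exists>v>0. P w = Some v" using z0(1) not_less_Least[of _ "\<lambda>z. z < m \<and> \<not> (\<exists>v>0. P z = Some v)"]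
        unfolding z0_def by (meson less_trans)
      have "mnst P (Suc z0) \<noteq> 0"
      proof -
        have "P z0 = None \<or> P z0 = Some 0" using z0(2) by (cases "P z0") auto
        then show ?thesis by (cases "mnst P z0 = 0") (auto simp: mnst_Suc)
      qed
      moreover have "\<And>a b. a \<le> b \<Longrightarrow> mnst P a \<noteq> 0 \<Longrightarrow> mnst P b \<noteq> 0"
      proof -
        fix a b :: nat assume "a \<le> b" "mnst P a \<noteq> 0"
        then show "mnst P b \<noteq> 0" by (induction b rule: dec_induct) (auto simp: mnst_Suc)
      qed
      ultimately show False using True z0(1) by (metis Suc_leI)
    qed
    show ?thesis
    proof
      assume h: "mnst P (Suc m) = y + 2"
      then have "(case P m of None \<Rightarrow> 1 | Some v \<Rightarrow> if v = 0 then m + 2 else 0) = y + 2" using True by (simp add: mnst_Suc)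
      then have "P m = Some 0" "y = m" by (auto split: option.splits if_splits)
      then show "y < Suc m \<and> P y = Some 0 \<and> (\<forall>z<y. \<exists>v>0. P z = Some v)" using fine by simp
    next
      assume h: "y < Suc m \<and> P y = Some 0 \<and> (\<forall>z<y. \<exists>v>0. P z = Some v)"
      then have "y = m" using notf by (metis less_SucE)
      then show "mnst P (Suc m) = y + 2" using True h by (simp add: mnst_Suc)
    qed
  next
    case False
    then have "mnst P (Suc m) = mnst P m" by (simp add: mnst_Suc)
    moreover have "y < m" if yh: "y < Suc m \<and> P y = Some 0 \<and> (\<forall>z<y. \<exists>v>0. P z = Some v)"
    proof (rule ccontr)
      assume "\<not> y < m"
      then have ym: "y = m" using yh by simp
      have "mnst P m = 0"
      proof -
        have "\<forall>k\<le>m. mnst P k = 0"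
        proof (intro allI impI)
          fix k assume "k \<le> m"
          then show "mnst P k = 0"
          proof (induction k)
            case 0 then show ?case by simp
          next
            case (Suc k)
            then obtain v where "v > 0" "P k = Some v" using yh ym by (metis Suc_le_lessD)
            then show ?case using Suc by (simp add: mnst_Suc)
          qed
        qed
        then show ?thesis by simp
      qed
      then show False using False by simp
    qed
    ultimately show ?thesis using Suc.IH by auto
  qed
qed

fun evb :: "recf \<Rightarrow> nat \<Rightarrow> nat list \<Rightarrow> nat option" where
  "evb Z s xs = Some 0"
| "evb S s xs = (case xs of [] \<Rightarrow> None | x # _ \<Rightarrow> Some (Suc x))"
| "evb (Proj i) s xs = Some (if i < length xs then xs ! i else 0)"
| "evb (Comp f gs) s xs = (if None \<in> set (map (\<lambda>g. evb g s xs) gs) then None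
     else evb f s (map (\<lambda>g. the (evb g s xs)) gs))"
| "evb (Prec f g) s xs = (case xs of [] \<Rightarrow> None | k # ys \<Rightarrow>
     rec_nat (evb f s ys) (\<lambda>i acc. case acc of None \<Rightarrow> None | Some a \<Rightarrow> evb g s (i # a # ys)) k)"
| "evb (Mn f) s xs = (let st = mnst (\<lambda>z. evb f s (z # xs)) s in if st \<ge> 2 then Some (st - 2) else None)"

lemma mnst_cases: "mnst P m \<ge> 2 \<Longrightarrow> \<exists>y. mnst P m = y + 2"
  by (metis add.commute le_add_diff_inverse2)

lemma evb_Mn_Some: "evb (Mn f) s xs = Some y \<longleftrightarrow> (y < s \<and> evb f s (y # xs) = Some 0 \<and> (\<forall>z<y. \<exists>v>0. evb f s (z # xs) = Some v))"
proof -
  have "evb (Mn f) s xs = Some y \<longleftrightarrow> mnst (\<lambda>z. evb f s (z # xs)) s = y + 2"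
    by (auto simp: Let_def dest: mnst_cases)
  then show ?thesis using mnst_char[of "\<lambda>z. evb f s (z # xs)" s y] by simp
qed

lemma evb_Prec_Cons: "evb (Prec f g) s (k # ys) = rec_nat (evb f s ys) (\<lambda>i acc. case acc of None \<Rightarrow> None | Some a \<Rightarrow> evb g s (i # a # ys)) k"
  by simp

lemma evb_Prec_Suc: "evb (Prec f g) s (Suc k # ys) = (case evb (Prec f g) s (k # ys) of None \<Rightarrow> None | Some a \<Rightarrow> evb g s (k # a # ys))"
  by simp

lemma evb_Prec_0: "evb (Prec f g) s (0 # ys) = evb f s ys"
  by simp

declare evb.simps(5)[simp del]

lemma evb_mono: "evb r s xs = Some y \<Longrightarrow> s \<le> s' \<Longrightarrow> evb r s' xs = Some y"
proof (induction r arbitrary: xs y)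
  case Z then show ?case by simp
next
  case S then show ?case by simp
next
  case (Proj i) then show ?case by simp
next
  case (Comp f gs)
  from Comp.prems have nn: "None \<notin> set (map (\<lambda>g. evb g s xs) gs)" by (auto split: if_splits)
  then have eq: "\<forall>g\<in>set gs. evb g s' xs = evb g s xs"
    using Comp.IH(2) Comp.prems(2) by (metis (no_types, lifting) image_eqI list.set_map option.exhaust)
  then have "map (\<lambda>g. evb g s' xs) gs = map (\<lambda>g. evb g s xs) gs" by simp
  moreover have "map (\<lambda>g. the (evb g s' xs)) gs = map (\<lambda>g. the (evb g s xs)) gs" using eq by simp
  moreover have "evb f s (map (\<lambda>g. the (evb g s xs)) gs) = Some y" using Comp.prems(1) nn by simp
  then have "evb f s' (map (\<lambda>g. the (evb g s xs)) gs) = Some y" using Comp.IH(1) Comp.prems(2) by blast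
  ultimately show ?case using nn by (simp only: evb.simps if_False) 
next
  case (Prec f g)
  show ?case
  proof (cases xs)
    case Nil then show ?thesis using Prec.prems by (simp add: evb.simps(5))
  next
    case (Cons k ys)
    have "\<forall>y. evb (Prec f g) s (k # ys) = Some y \<longrightarrow> evb (Prec f g) s' (k # ys) = Some y"
    proof (induction k)
      case 0 then show ?case using Prec.IH(1) Prec.prems(2) by (simp add: evb_Prec_0)
    next
      case (Suc k)
      then show ?case using Prec.IH(2) Prec.prems(2) by (auto simp: evb_Prec_Suc split: option.splits)
    qed
    then show ?thesis using Prec.prems(1) Cons by blast
  qed
next
  case (Mn f)
  then show ?case unfolding evb_Mn_Some by (meson less_le_trans)
qed

lemma common_budget:
  fixes m :: nat and Q :: "nat \<Rightarrow> nat \<Rightarrow> bool"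
  assumes "\<forall>k<m. \<exists>s. Q k s" and "\<And>k s s'. Q k s \<Longrightarrow> s \<le> s' \<Longrightarrow> Q k s'"
  shows "\<exists>s. \<forall>k<m. Q k s"
  using assms(1)
proof (induction m)
  case 0 then show ?case by simp
next
  case (Suc m)
  then obtain s0 where s0: "\<forall>k<m. Q k s0" by auto
  obtain s1 where s1: "Q m s1" using Suc.prems by auto
  have "\<forall>k<Suc m. Q k (max s0 s1)"
    using s0 s1 assms(2) by (metis less_Suc_eq max.cobounded1 max.cobounded2)
  then show ?case by blast
qed

lemma evb_eval: "evb r s xs = Some y \<Longrightarrow> eval r xs y"
proof (induction r arbitrary: xs y)
  case Z then show ?case by (simp add: ev_Z)
next
  case S then show ?case by (cases xs) (auto intro: ev_S)
next
  case (Proj i) then show ?case by (metis ev_Proj evb.simps(3) option.inject)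
next
  case (Comp f gs)
  from Comp.prems have nn: "None \<notin> set (map (\<lambda>g. evb g s xs) gs)" by (auto split: if_splits)
  let ?ys = "map (\<lambda>g. the (evb g s xs)) gs"
  have fy: "evb f s ?ys = Some y" using Comp.prems nn by simp
  have "\<forall>k<length gs. eval (gs ! k) xs (?ys ! k)"
  proof (intro allI impI)
    fix k assume k: "k < length gs"
    have "evb (gs ! k) s xs \<noteq> None"
    proof
      assume a: "evb (gs ! k) s xs = None"
      have "None \<in> (\<lambda>g. evb g s xs) ` set gs" by (rule image_eqI[where x="gs ! k"]) (use a nth_mem[OF k] in auto)
      then show False using nn by simp
    qed
    then have "evb (gs ! k) s xs = Some (?ys ! k)" using k by auto
    then show "eval (gs ! k) xs (?ys ! k)" using Comp.IH(2) k nth_mem by blast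
  qed
  moreover have "eval f ?ys y" using Comp.IH(1) fy by blast
  ultimately show ?case by (intro ev_Comp) auto
next
  case (Prec f g)
  obtain k ys where xs: "xs = k # ys" using Prec.prems by (cases xs) (auto simp: evb.simps(5))
  have "\<forall>y. evb (Prec f g) s (k # ys) = Some y \<longrightarrow> eval (Prec f g) (k # ys) y"
  proof (induction k)
    case 0 then show ?case using Prec.IH(1) by (auto simp: evb_Prec_0 intro: ev_Prec0)
  next
    case (Suc k)
    show ?case
    proof (intro allI impI)
      fix y assume "evb (Prec f g) s (Suc k # ys) = Some y"
      then obtain a where a: "evb (Prec f g) s (k # ys) = Some a" "evb g s (k # a # ys) = Some y"
        by (auto simp: evb_Prec_Suc split: option.splits)
      then show "eval (Prec f g) (Suc k # ys) y" using Suc.IH Prec.IH(2) by (blast intro: ev_PrecS)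
    qed
  qed
  then show ?case using Prec.prems xs by blast
next
  case (Mn f)
  then have h: "evb f s (y # xs) = Some 0" "\<forall>z<y. \<exists>v>0. evb f s (z # xs) = Some v"
    unfolding evb_Mn_Some by auto
  show ?case
  proof (rule ev_Mn)
    show "eval f (y # xs) 0" using h(1) Mn.IH by blast
    show "\<forall>z<y. \<exists>v. eval f (z # xs) v \<and> v > 0" using h(2) Mn.IH by blast
  qed
qed

lemma eval_evb: "eval r xs y \<Longrightarrow> \<exists>s. evb r s xs = Some y"
proof (induction r arbitrary: xs y)
  case Z then show ?case by (auto elim!: evZE)
next
  case S from S.prems show ?case by (rule evSE) simp
next
  case (Proj i) from Proj.prems show ?case by (rule evProjE) simp
next
  case (Comp f gs)
  from Comp.prems obtain ys where h: "length ys = length gs" "\<forall>k<length gs. eval (gs ! k) xs (ys ! k)" "eval f ys y"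
    by (rule evCompE)
  have "\<forall>k<length gs. \<exists>s. evb (gs ! k) s xs = Some (ys ! k)"
    using h(2) Comp.IH(2) nth_mem by blast
  then obtain s1 where s1: "\<forall>k<length gs. evb (gs ! k) s1 xs = Some (ys ! k)"
    using common_budget[of "length gs" "\<lambda>k s. evb (gs ! k) s xs = Some (ys ! k)"] evb_mono by blast
  obtain s2 where s2: "evb f s2 ys = Some y" using Comp.IH(1) h(3) by blast
  let ?s = "max s1 s2"
  have a: "\<forall>k<length gs. evb (gs ! k) ?s xs = Some (ys ! k)" using s1 evb_mono by (meson max.cobounded1)
  have nn: "None \<notin> set (map (\<lambda>g. evb g ?s xs) gs)" using a by (auto simp: in_set_conv_nth)
  have m: "map (\<lambda>g. the (evb g ?s xs)) gs = ys" using a h(1) by (intro nth_equalityI) auto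
  have "evb f ?s ys = Some y" using s2 evb_mono by (meson max.cobounded2)
  then show ?case using nn m by (intro exI[of _ ?s]) (simp only: evb.simps if_False)
next
  case (Prec f g)
  from Prec.prems obtain k ys where xs: "xs = k # ys" by (rule evPrecE) auto
  have "\<forall>y. eval (Prec f g) (k # ys) y \<longrightarrow> (\<exists>s. evb (Prec f g) s (k # ys) = Some y)"
  proof (induction k)
    case 0 then show ?case using Prec.IH(1) by (auto simp: evb_Prec_0 elim!: evPrec0E)
  next
    case (Suc k)
    show ?case
    proof (intro allI impI)
      fix y assume "eval (Prec f g) (Suc k # ys) y"
      then obtain a where a: "eval (Prec f g) (k # ys) a" "eval g (k # a # ys) y" by (rule evPrecSE)
      obtain s1 where s1: "evb (Prec f g) s1 (k # ys) = Some a" using Suc.IH a(1) by blast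
      obtain s2 where s2: "evb g s2 (k # a # ys) = Some y" using Prec.IH(2) a(2) by blast
      have "evb (Prec f g) (max s1 s2) (k # ys) = Some a" using s1 evb_mono by (meson max.cobounded1)
      moreover have "evb g (max s1 s2) (k # a # ys) = Some y" using s2 evb_mono by (meson max.cobounded2)
      ultimately show "\<exists>s. evb (Prec f g) s (Suc k # ys) = Some y" by (intro exI[of _ "max s1 s2"]) (simp add: evb_Prec_Suc)
    qed
  qed
  then show ?case using Prec.prems xs by blast
next
  case (Mn f)
  from Mn.prems have h: "eval f (y # xs) 0" "\<forall>z<y. \<exists>v. eval f (z # xs) v \<and> v > 0" by (rule evMnE, blast)+
  let ?Q = "\<lambda>z s. (z < y \<longrightarrow> (\<exists>v>0. evb f s (z # xs) = Some v)) \<and> (z = y \<longrightarrow> evb f s (y # xs) = Some 0)"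
  have "\<forall>z<Suc y. \<exists>s. ?Q z s"
  proof (intro allI impI)
    fix z assume "z < Suc y"
    then consider "z < y" | "z = y" by linarith
    then show "\<exists>s. ?Q z s"
    proof cases
      case 1
      then obtain v where "eval f (z # xs) v" "v > 0" using h(2) by blast
      then obtain s where "evb f s (z # xs) = Some v" using Mn.IH by blast
      then show ?thesis using 1 \<open>v > 0\<close> by auto
    next
      case 2
      then obtain s where "evb f s (y # xs) = Some 0" using Mn.IH h(1) by blast
      then show ?thesis using 2 by auto
    qed
  qed
  moreover have "\<And>k s s'. ?Q k s \<Longrightarrow> s \<le> s' \<Longrightarrow> ?Q k s'" using evb_mono by blast
  ultimately obtain s1 where s1: "\<forall>z<Suc y. ?Q z s1" using common_budget[of "Suc y" ?Q] by blast
  let ?s = "max s1 (Suc y)"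
  have "evb f s1 (y # xs) = Some 0" using s1 by blast
  then have "evb f ?s (y # xs) = Some 0" using evb_mono[of f s1 "y # xs" 0 ?s] by simp
  moreover have "\<forall>z<y. \<exists>v>0. evb f ?s (z # xs) = Some v"
  proof (intro allI impI)
    fix z assume "z < y"
    have "z < Suc y" using \<open>z < y\<close> by simp
    then have "?Q z s1" using s1 by blast
    then obtain v where "v > 0" "evb f s1 (z # xs) = Some v" using \<open>z < y\<close> by blast
    then show "\<exists>v>0. evb f ?s (z # xs) = Some v" using evb_mono[of f s1 "z # xs" v ?s] by auto
  qed
  ultimately have "evb (Mn f) ?s xs = Some y" unfolding evb_Mn_Some by simp
  then show ?case by blast
qed

lemma eval_iff_evb: "eval r xs y \<longleftrightarrow> (\<exists>s. evb r s xs = Some y)"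
  using eval_evb evb_eval by blast

fun enco :: "nat option \<Rightarrow> nat" where
  "enco None = 0" | "enco (Some y) = Suc y"

lemma enco_0_iff: "enco x = 0 \<longleftrightarrow> x = None" by (cases x) auto

lemma map_nth_drop: "map (\<lambda>i. ws ! i) [k..<length ws] = drop k ws"
  by (intro nth_equalityI) auto

lemma tp_allpos: "\<forall>g\<in>set gs. tf n g \<Longrightarrow> tf n (\<lambda>xs. if \<forall>g\<in>set gs. 0 < g xs then 1 else 0)"
proof (induction gs)
  case Nil then show ?case by (simp add: tf_const)
next
  case (Cons g gs)
  then have "tf n (\<lambda>xs. if 0 < g xs \<and> (\<forall>g\<in>set gs. 0 < g xs) then 1 else 0)"
    by (intro tp_and tp_less tf_const) auto
  then show ?case by simp
qed

lemma tf_projs_from: "\<forall>g\<in>set (map (\<lambda>i ws. ws ! i) [k..<m]). tf m g"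
  by (auto intro: tf_proj)

lemma enco_prec: "enco (rec_nat (evb f s zs) (\<lambda>i acc. case acc of None \<Rightarrow> None | Some a \<Rightarrow> evb g s (i # a # zs)) k)
  = rec_nat (enco (evb f s zs)) (\<lambda>i acc. if acc = 0 then 0 else enco (evb g s (i # (acc - 1) # zs))) k"
proof (induction k)
  case 0 then show ?case by simp
next
  case (Suc k)
  show ?case
  proof (cases "rec_nat (evb f s zs) (\<lambda>i acc. case acc of None \<Rightarrow> None | Some a \<Rightarrow> evb g s (i # a # zs)) k")
    case None then show ?thesis using Suc.IH by simp
  next
    case (Some a)
    then have "rec_nat (enco (evb f s zs)) (\<lambda>i acc. if acc = 0 then 0 else enco (evb g s (i # (acc - 1) # zs))) k = Suc a"
      using Suc.IH by simp
    then show ?thesis using Some by simp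
  qed
qed

lemma mnst_enco: "mnst P m = rec_nat 0 (\<lambda>z st. if st = 0 then (if enco (P z) = 0 then 1 else if enco (P z) = 1 then z + 2 else 0) else st) m"
proof -
  have "(\<lambda>z st. if st \<noteq> 0 then st else (case P z of None \<Rightarrow> 1 | Some v \<Rightarrow> if v = 0 then z + 2 else 0))
      = (\<lambda>z st. if st = 0 then (if enco (P z) = 0 then 1 else if enco (P z) = 1 then z + 2 else 0) else st)"
    by (intro ext) (auto split: option.splits)
  then show ?thesis unfolding mnst_def by simp
qed

lemma mn_aux: "mnst P s = R \<Longrightarrow> (if 2 \<le> R then R - 1 else 0) = enco (let st = mnst P s in if 2 \<le> st then Some (st - 2) else None)"
  by (auto simp: Let_def)

theorem tf_clock: "tf (Suc n) (\<lambda>ys. enco (evb r (hd ys) (tl ys)))"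
proof (induction r arbitrary: n)
  case Z
  show ?case by (rule tf_cong[OF tf_const[of _ 1]]) simp
next
  case S
  show ?case
  proof (cases n)
    case 0
    show ?thesis by (rule tf_cong[OF tf_const[of _ 0]]) (use 0 in \<open>auto simp: length_Suc_conv\<close>)
  next
    case (Suc n')
    show ?thesis
      by (rule tf_cong[OF tf_Suc[OF tf_Suc[OF tf_proj[of 1]]]]) (use Suc in \<open>auto simp: length_Suc_conv\<close>)
  qed
next
  case (Proj i)
  show ?case
  proof (cases "i < n")
    case True
    show ?thesis
      by (rule tf_cong[OF tf_Suc[OF tf_proj[of "Suc i"]]]) (use True in \<open>auto simp: length_Suc_conv\<close>)
  next
    case False
    show ?thesis
      by (rule tf_cong[OF tf_const[of _ 1]]) (use False in \<open>auto simp: length_Suc_conv\<close>)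
  qed
next
  case (Comp f gs)
  let ?C = "\<lambda>g ys. enco (evb g (hd ys) (tl ys))"
  have Cg: "\<forall>g\<in>set (map ?C gs). tf (Suc n) g" using Comp.IH(2) by auto
  have Cg1: "\<forall>g\<in>set (hd # map (\<lambda>g ys. ?C g ys - 1) gs). tf (Suc n) g"
  proof -
    have "\<forall>g\<in>set gs. tf (Suc n) (\<lambda>ys. ?C g ys - 1)"
    proof
      fix g assume "g \<in> set gs"
      show "tf (Suc n) (\<lambda>ys. ?C g ys - 1)" by (rule tf_pred) (use Comp.IH(2) \<open>g \<in> set gs\<close> in blast)
    qed
    then show ?thesis using tf_hd by auto
  qed
  have t1: "tf (Suc n) (\<lambda>ys. ?C f (map (\<lambda>g. g ys) (hd # map (\<lambda>g ys. ?C g ys - 1) gs)))"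
    by (rule tf_comp[OF Comp.IH(1)[of "length gs"] _ Cg1]) simp
  have "tf (Suc n) (\<lambda>ys. if \<forall>g\<in>set (map ?C gs). 0 < g ys then ?C f (map (\<lambda>g. g ys) (hd # map (\<lambda>g ys. ?C g ys - 1) gs)) else 0)"
    by (rule tf_if[OF tp_allpos[OF Cg] t1 tf_const])
  then show ?case
  proof (rule tf_cong)
    fix ys :: "nat list" assume "length ys = Suc n"
    then obtain s xs where ys: "ys = s # xs" by (cases ys) auto
    show "(if \<forall>g\<in>set (map ?C gs). 0 < g ys then ?C f (map (\<lambda>g. g ys) (hd # map (\<lambda>g ys. ?C g ys - 1) gs)) else 0)
        = ?C (Comp f gs) ys"
    proof (cases "None \<in> set (map (\<lambda>g. evb g s xs) gs)")
      case True
      then obtain g where "g \<in> set gs" "evb g s xs = None" by auto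
      then show ?thesis using True ys by auto
    next
      case False
      then have "\<forall>g\<in>set gs. evb g s xs \<noteq> None" by (metis image_eqI list.set_map)
      then have pos: "\<forall>g\<in>set (map ?C gs). 0 < g ys" and
        m: "map (\<lambda>g. enco (evb g s xs) - 1) gs = map (\<lambda>g. the (evb g s xs)) gs"
        using ys by (auto simp: enco_0_iff)
      have m': "map (\<lambda>x. enco (evb x s xs) - Suc 0) gs = map (\<lambda>g. the (evb g s xs)) gs"
        using m by simp
      show ?thesis using False ys pos by (simp add: comp_def m' del: map_eq_conv)
    qed
  qed
next
  case (Prec f g)
  let ?C = "\<lambda>g ys. enco (evb g (hd ys) (tl ys))"
  show ?case
  proof (cases n)
    case 0
    show ?thesis by (rule tf_cong[OF tf_const[of _ 0]]) (use 0 in \<open>auto simp: length_Suc_conv evb.simps(5)\<close>)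
  next
    case (Suc n')
    have z: "tf (Suc n) (\<lambda>ys. ?C f (map (\<lambda>g. g ys) (hd # map (\<lambda>i ws. ws ! i) [2..<Suc n])))"
      by (rule tf_comp[OF Prec.IH(1)[of n']]) (use Suc tf_hd in \<open>auto intro: tf_proj\<close>)
    have cg: "tf (Suc (Suc (Suc n))) (\<lambda>ws. ?C g (map (\<lambda>g. g ws) ([\<lambda>ws. ws ! 2, \<lambda>ws. ws ! 0, \<lambda>ws. ws ! 1 - 1] @ map (\<lambda>i ws. ws ! i) [4..<Suc (Suc (Suc n))])))"
    proof (rule tf_comp[OF Prec.IH(2)[of "Suc (Suc n')"]])
      show "length ([\<lambda>ws. ws ! 2, \<lambda>ws. ws ! 0, \<lambda>ws. ws ! 1 - 1] @ map (\<lambda>i ws. ws ! i) [4..<Suc (Suc (Suc n))]) = Suc (Suc (Suc n'))"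
        using Suc by (simp del: upt_Suc)
      have "\<forall>g\<in>set (map (\<lambda>i ws. ws ! i) [4..<Suc (Suc (Suc n))]). tf (Suc (Suc (Suc n))) g" by (rule tf_projs_from)
      moreover have "tf (Suc (Suc (Suc n))) (\<lambda>ws. ws ! 2)" "tf (Suc (Suc (Suc n))) (\<lambda>ws. ws ! 0)" by (rule tf_proj, simp)+
      moreover have "tf (Suc (Suc (Suc n))) (\<lambda>ws. ws ! 1 - 1)" by (rule tf_pred[OF tf_proj]) simp
      ultimately show "\<forall>g\<in>set ([\<lambda>ws. ws ! 2, \<lambda>ws. ws ! 0, \<lambda>ws. ws ! 1 - 1] @ map (\<lambda>i ws. ws ! i) [4..<Suc (Suc (Suc n))]). tf (Suc (Suc (Suc n))) g"
        by simp
    qed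
    have st: "tf (Suc (Suc (Suc n))) (\<lambda>ws. if ws ! 1 = 0 then 0 else ?C g (map (\<lambda>g. g ws) ([\<lambda>ws. ws ! 2, \<lambda>ws. ws ! 0, \<lambda>ws. ws ! 1 - 1] @ map (\<lambda>i ws. ws ! i) [4..<Suc (Suc (Suc n))])))"
      by (rule tf_if[OF tp_eq[OF tf_proj tf_const] tf_const cg]) simp
    have "tf (Suc n) (\<lambda>ys. rec_nat (?C f (map (\<lambda>g. g ys) (hd # map (\<lambda>i ws. ws ! i) [2..<Suc n])))
       (\<lambda>i acc. (\<lambda>ws. if ws ! 1 = 0 then 0 else ?C g (map (\<lambda>g. g ws) ([\<lambda>ws. ws ! 2, \<lambda>ws. ws ! 0, \<lambda>ws. ws ! 1 - 1] @ map (\<lambda>i ws. ws ! i) [4..<Suc (Suc (Suc n))]))) (i # acc # ys)) (ys ! 1))"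
      by (rule tf_rec[OF tf_proj z st]) (simp add: Suc)
    then show ?thesis
    proof (rule tf_cong)
      fix ys :: "nat list" assume len: "length ys = Suc n"
      then obtain s k zs where ys: "ys = s # k # zs" and lz: "length zs = n'" using Suc by (auto simp: length_Suc_conv)
      have e1: "map (\<lambda>g. g ys) (hd # map (\<lambda>i ws. ws ! i) [2..<Suc n]) = s # zs"
        using ys lz Suc map_nth_drop[of ys 2] len by (simp add: comp_def)
      have e2: "\<And>i acc. map (\<lambda>g. g (i # acc # ys)) ([\<lambda>ws. ws ! 2, \<lambda>ws. ws ! 0, \<lambda>ws. ws ! 1 - 1] @ map (\<lambda>i ws. ws ! i) [4..<Suc (Suc (Suc n))])
          = s # i # (acc - 1) # zs"
      proof -
        fix i acc
        have d: "map (\<lambda>j. (i # acc # ys) ! j) [4..<length (i # acc # ys)] = drop 4 (i # acc # ys)" by (rule map_nth_drop)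
        have L1: "[4..<Suc (Suc (Suc n))] = [4..<length (i # acc # ys)]" using len by simp
        have "map (\<lambda>g. g (i # acc # ys)) ([\<lambda>ws. ws ! 2, \<lambda>ws. ws ! 0, \<lambda>ws. ws ! 1 - 1] @ map (\<lambda>i ws. ws ! i) [4..<Suc (Suc (Suc n))])
           = (i # acc # ys) ! 2 # (i # acc # ys) ! 0 # ((i # acc # ys) ! 1 - 1) # map (\<lambda>j. (i # acc # ys) ! j) [4..<Suc (Suc (Suc n))]"
          by (simp only: map_append map_map comp_def list.map append_Cons append_Nil)
        also have "\<dots> = s # i # (acc - 1) # zs" unfolding L1 d using ys by (simp add: numeral_eq_Suc)
        finally show "map (\<lambda>g. g (i # acc # ys)) ([\<lambda>ws. ws ! 2, \<lambda>ws. ws ! 0, \<lambda>ws. ws ! 1 - 1] @ map (\<lambda>i ws. ws ! i) [4..<Suc (Suc (Suc n))])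
          = s # i # (acc - 1) # zs" .
      qed
      show "rec_nat (?C f (map (\<lambda>g. g ys) (hd # map (\<lambda>i ws. ws ! i) [2..<Suc n])))
       (\<lambda>i acc. (\<lambda>ws. if ws ! 1 = 0 then 0 else ?C g (map (\<lambda>g. g ws) ([\<lambda>ws. ws ! 2, \<lambda>ws. ws ! 0, \<lambda>ws. ws ! 1 - 1] @ map (\<lambda>i ws. ws ! i) [4..<Suc (Suc (Suc n))]))) (i # acc # ys)) (ys ! 1)
        = ?C (Prec f g) ys"
        unfolding e1 e2 using ys by (simp add: evb.simps(5) enco_prec cong: if_cong)
    qed
  qed
next
  case (Mn f)
  let ?C = "\<lambda>g ys. enco (evb g (hd ys) (tl ys))"
  let ?L = "[\<lambda>ws. ws ! 2, \<lambda>ws. ws ! 0] @ map (\<lambda>i ws. ws ! i) [3..<Suc (Suc (Suc n))]"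
  have cf: "tf (Suc (Suc (Suc n))) (\<lambda>ws. ?C f (map (\<lambda>g. g ws) ?L))"
  proof (rule tf_comp[OF Mn.IH[of "Suc n"]])
    show "length ?L = Suc (Suc n)" by (simp del: upt_Suc)
    have "\<forall>g\<in>set (map (\<lambda>i ws. ws ! i) [3..<Suc (Suc (Suc n))]). tf (Suc (Suc (Suc n))) g" by (rule tf_projs_from)
    moreover have "tf (Suc (Suc (Suc n))) (\<lambda>ws. ws ! 2)" "tf (Suc (Suc (Suc n))) (\<lambda>ws. ws ! 0)" by (rule tf_proj, simp)+
    ultimately show "\<forall>g\<in>set ?L. tf (Suc (Suc (Suc n))) g" by simp
  qed
  have st: "tf (Suc (Suc (Suc n))) (\<lambda>ws. if ws ! 1 = 0 then (if ?C f (map (\<lambda>g. g ws) ?L) = 0 then 1 else if ?C f (map (\<lambda>g. g ws) ?L) = 1 then ws ! 0 + 2 else 0) else ws ! 1)"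
    by (intro tf_if[OF tp_eq[OF tf_proj tf_const]] tf_if[OF tp_eq[OF cf tf_const]] tf_const tf_add tf_proj) simp_all
  have R: "tf (Suc n) (\<lambda>ys. rec_nat 0 (\<lambda>i acc. (\<lambda>ws. if ws ! 1 = 0 then (if ?C f (map (\<lambda>g. g ws) ?L) = 0 then 1 else if ?C f (map (\<lambda>g. g ws) ?L) = 1 then ws ! 0 + 2 else 0) else ws ! 1) (i # acc # ys)) (hd ys))"
    by (rule tf_rec[OF tf_hd tf_const st])
  have "tf (Suc n) (\<lambda>ys. if 2 \<le> rec_nat 0 (\<lambda>i acc. (\<lambda>ws. if ws ! 1 = 0 then (if ?C f (map (\<lambda>g. g ws) ?L) = 0 then 1 else if ?C f (map (\<lambda>g. g ws) ?L) = 1 then ws ! 0 + 2 else 0) else ws ! 1) (i # acc # ys)) (hd ys)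
      then rec_nat 0 (\<lambda>i acc. (\<lambda>ws. if ws ! 1 = 0 then (if ?C f (map (\<lambda>g. g ws) ?L) = 0 then 1 else if ?C f (map (\<lambda>g. g ws) ?L) = 1 then ws ! 0 + 2 else 0) else ws ! 1) (i # acc # ys)) (hd ys) - 1 else 0)"
    by (rule tf_if[OF tp_le[OF tf_const R] tf_pred[OF R] tf_const])
  then show ?case
  proof (rule tf_cong)
    fix ys :: "nat list" assume len: "length ys = Suc n"
    then obtain s xs where ys: "ys = s # xs" by (cases ys) auto
    have e: "\<And>i acc. map (\<lambda>g. g (i # acc # ys)) ?L = s # i # xs"
    proof -
      fix i acc
      have d: "map (\<lambda>j. (i # acc # ys) ! j) [3..<length (i # acc # ys)] = drop 3 (i # acc # ys)" by (rule map_nth_drop)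
      have L1: "[3..<Suc (Suc (Suc n))] = [3..<length (i # acc # ys)]" using len by simp
      have "map (\<lambda>g. g (i # acc # ys)) ?L = (i # acc # ys) ! 2 # (i # acc # ys) ! 0 # map (\<lambda>j. (i # acc # ys) ! j) [3..<Suc (Suc (Suc n))]"
        by (simp only: map_append map_map comp_def list.map append_Cons append_Nil)
      also have "\<dots> = s # i # xs" unfolding L1 d using ys by (simp add: numeral_eq_Suc)
      finally show "map (\<lambda>g. g (i # acc # ys)) ?L = s # i # xs" .
    qed
    have "mnst (\<lambda>z. evb f s (z # xs)) s = rec_nat 0 (\<lambda>i acc. (\<lambda>ws. if ws ! 1 = 0 then (if ?C f (map (\<lambda>g. g ws) ?L) = 0 then 1 else if ?C f (map (\<lambda>g. g ws) ?L) = 1 then ws ! 0 + 2 else 0) else ws ! 1) (i # acc # ys)) (hd ys)"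
    proof -
      have e': "\<And>i acc. map (\<lambda>g. g (i # acc # s # xs)) ?L = s # i # xs" using e ys by simp
      show ?thesis unfolding ys unfolding mnst_enco e'
        by (simp only: list.sel) (rule arg_cong[where f="\<lambda>F. rec_nat 0 F s"], intro ext, simp)
    qed
    then show "(if 2 \<le> rec_nat 0 (\<lambda>i acc. (\<lambda>ws. if ws ! 1 = 0 then (if ?C f (map (\<lambda>g. g ws) ?L) = 0 then 1 else if ?C f (map (\<lambda>g. g ws) ?L) = 1 then ws ! 0 + 2 else 0) else ws ! 1) (i # acc # ys)) (hd ys)
      then rec_nat 0 (\<lambda>i acc. (\<lambda>ws. if ws ! 1 = 0 then (if ?C f (map (\<lambda>g. g ws) ?L) = 0 then 1 else if ?C f (map (\<lambda>g. g ws) ?L) = 1 then ws ! 0 + 2 else 0) else ws ! 1) (i # acc # ys)) (hd ys) - 1 else 0)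
      = ?C (Mn f) ys"
      using mn_aux ys by (simp only: list.sel evb.simps)
  qed
qed

section \<open>Strings coded as numbers\<close>

lemma enc_Cons1: "enc (b # bs) + 1 = 2 * (enc bs + 1) + (if b then 1 else 0)"
  by simp

lemma enc_bounds: "2 ^ length p \<le> enc p + 1 \<and> enc p + 1 < 2 ^ Suc (length p)"
proof (induction p)
  case Nil then show ?case by simp
next
  case (Cons b bs)
  then show ?case unfolding enc_Cons1 by auto
qed

lemma enc_inj: "enc p = enc q \<Longrightarrow> p = q"
proof (induction p arbitrary: q)
  case Nil then show ?case by (cases q) (auto split: if_splits)
next
  case (Cons b bs)
  obtain a list where q: "q = a # list" using Cons.prems by (cases q) (auto split: if_splits)
  have e: "2 * enc bs + (if b then 2 else 1) = 2 * enc list + (if a then (2::nat) else 1)" using Cons.prems q by simp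
  have ab: "a = b"
  proof (rule ccontr)
    assume "a \<noteq> b"
    then have "odd (2 * enc bs + (if b then 2 else 1)) \<noteq> odd (2 * enc list + (if a then (2::nat) else 1))"
      by (cases a; cases b) simp_all
    then show False using e by simp
  qed
  then have "enc bs = enc list" using e by simp
  then show ?case using Cons.IH q ab by simp
qed

fun dec :: "nat \<Rightarrow> bool list" where
  "dec 0 = []"
| "dec (Suc m) = (if even m then False # dec (m div 2) else True # dec (m div 2))"

lemma enc_dec[simp]: "enc (dec m) = m"
proof (induction m rule: dec.induct)
  case 1 then show ?case by simp
next
  case (2 m)
  then show ?case by (auto elim: oddE)
qed

lemma dec_enc[simp]: "dec (enc p) = p"
  using enc_inj enc_dec by metis

lemma enc_append: "enc (p @ q) = enc p + 2 ^ length p * enc q"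
  by (induction p) (auto simp: algebra_simps)

lemma enc_drop: "enc (drop i p) = (enc p + 1) div 2 ^ i - 1"
proof (induction p arbitrary: i)
  case Nil then show ?case by (cases i) auto
next
  case (Cons b bs)
  show ?case
  proof (cases i)
    case 0 then show ?thesis by simp
  next
    case (Suc j)
    have "(enc (b # bs) + 1) div 2 ^ i = ((enc (b # bs) + 1) div 2) div 2 ^ j" using Suc by (simp add: div_mult2_eq)
    also have "(enc (b # bs) + 1) div 2 = enc bs + 1" unfolding enc_Cons1 by auto
    finally show ?thesis using Suc Cons.IH by simp
  qed
qed

lemma enc_take: "i \<le> length p \<Longrightarrow> enc (take i p) = (enc p + 1) mod 2 ^ i + 2 ^ i - 1"
proof (induction p arbitrary: i)
  case Nil then show ?case by simp
next
  case (Cons b bs)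
  show ?case
  proof (cases i)
    case 0 then show ?thesis by simp
  next
    case (Suc j)
    then have j: "j \<le> length bs" using Cons.prems by simp
    have m: "(enc (b # bs) + 1) mod 2 ^ i = 2 * ((enc bs + 1) mod 2 ^ j) + (if b then 1 else 0)"
      unfolding enc_Cons1 Suc by (simp add: mod_mult2_eq)
    have p: "(1::nat) \<le> 2 ^ j" by simp
    have "enc (take i (b # bs)) = 2 * enc (take j bs) + (if b then 2 else 1)" using Suc by simp
    also have "\<dots> = 2 * ((enc bs + 1) mod 2 ^ j + 2 ^ j - 1) + (if b then 2 else 1)" using Cons.IH[OF j] by simp
    also have "\<dots> = (enc (b # bs) + 1) mod 2 ^ i + 2 ^ i - 1" unfolding m using Suc by (cases b; simp; insert p; arith)
    finally show ?thesis .
  qed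
qed

lemma length_enc_least: "length p = (LEAST L. enc p + 1 < 2 ^ Suc L)"
proof (rule Least_equality[symmetric])
  show "enc p + 1 < 2 ^ Suc (length p)" using enc_bounds by blast
  fix L assume "enc p + 1 < 2 ^ Suc L"
  then have "2 ^ length p < (2::nat) ^ Suc L" using enc_bounds[of p] by linarith
  then have "length p < Suc L" using power_strict_increasing_iff[of "2::nat" "length p" "Suc L"] by simp
  then show "length p \<le> L" by simp
qed

definition lenC :: "nat \<Rightarrow> nat" where "lenC m = length (dec m)"

lemma lenC_enc[simp]: "lenC (enc p) = length p" by (simp add: lenC_def)

lemma tf_lenC: "tf n a \<Longrightarrow> tf n (\<lambda>xs. lenC (a xs))"
proof -
  assume a: "tf n a"
  have "tf n (\<lambda>xs. LEAST L. a xs + 1 < 2 ^ Suc L)"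
  proof (rule tf_search'[where P = "\<lambda>L xs. a xs + 1 < 2 ^ Suc L"])
    show "tf (Suc n) (\<lambda>ys. if a (tl ys) + 1 < 2 ^ Suc (hd ys) then 1 else 0)"
      by (rule tp_less[OF tf_add[OF tf_drop1[OF a] tf_const] tf_pow[OF tf_const tf_Suc[OF tf_hd]]])
    fix xs show "\<exists>L. a xs + 1 < 2 ^ Suc L"
      using enc_bounds[of "dec (a xs)"] by auto
  qed
  then show ?thesis by (rule tf_cong) (metis enc_dec lenC_def length_enc_least)
qed

lemma tf_appC: "tf n a \<Longrightarrow> tf n b \<Longrightarrow> tf n (\<lambda>xs. enc (dec (a xs) @ dec (b xs)))"
proof -
  assume a: "tf n a" and b: "tf n b"
  have "tf n (\<lambda>xs. a xs + 2 ^ lenC (a xs) * b xs)" by (rule tf_add[OF a tf_mult[OF tf_pow[OF tf_const tf_lenC[OF a]] b]])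
  then show ?thesis by (rule tf_cong) (simp add: enc_append lenC_def)
qed

lemma tf_dropC: "tf n i \<Longrightarrow> tf n a \<Longrightarrow> tf n (\<lambda>xs. enc (drop (i xs) (dec (a xs))))"
proof -
  assume i: "tf n i" and a: "tf n a"
  have "tf n (\<lambda>xs. (a xs + 1) div 2 ^ i xs - 1)" by (rule tf_pred[OF tf_div[OF tf_add[OF a tf_const] tf_pow[OF tf_const i]]])
  then show ?thesis by (rule tf_cong) (simp add: enc_drop)
qed

lemma tf_takeC: "tf n i \<Longrightarrow> tf n a \<Longrightarrow> tf n (\<lambda>xs. enc (take (i xs) (dec (a xs))))"
proof -
  assume i: "tf n i" and a: "tf n a"
  have "tf n (\<lambda>xs. if i xs \<le> lenC (a xs) then (a xs + 1) mod 2 ^ i xs + 2 ^ i xs - 1 else a xs)"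
    by (rule tf_if[OF tp_le[OF i tf_lenC[OF a]] tf_sub[OF tf_add[OF tf_mod[OF tf_add[OF a tf_const] tf_pow[OF tf_const i]] tf_pow[OF tf_const i]] tf_const] a])
  then show ?thesis by (rule tf_cong) (simp add: enc_take lenC_def)
qed

definition bitC :: "nat \<Rightarrow> nat \<Rightarrow> nat" where
  "bitC i m = (let d = (m + 1) div 2 ^ i - 1 in if d mod 2 = 0 \<and> d > 0 then 1 else 0)"

lemma bitC_correct: "i < length p \<Longrightarrow> bitC i (enc p) = (if p ! i then 1 else 0)"
proof -
  assume i: "i < length p"
  then have "drop i p = p ! i # drop (Suc i) p" by (simp add: Cons_nth_drop_Suc)
  then have "enc (drop i p) = 2 * enc (drop (Suc i) p) + (if p ! i then 2 else 1)" by simp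
  then show ?thesis unfolding bitC_def Let_def enc_drop[symmetric] by auto
qed

lemma tf_bitC: "tf n i \<Longrightarrow> tf n a \<Longrightarrow> tf n (\<lambda>xs. bitC (i xs) (a xs))"
proof -
  assume i: "tf n i" and a: "tf n a"
  have "tf n (\<lambda>xs. if ((a xs + 1) div 2 ^ i xs - 1) mod 2 = 0 \<and> 0 < (a xs + 1) div 2 ^ i xs - 1 then 1 else 0)"
  proof -
    have d: "tf n (\<lambda>xs. (a xs + 1) div 2 ^ i xs - 1)" by (rule tf_pred[OF tf_div[OF tf_add[OF a tf_const] tf_pow[OF tf_const i]]])
    show ?thesis by (rule tp_and[OF tp_eq[OF tf_mod[OF d tf_const] tf_const] tp_less[OF tf_const d]])
  qed
  then show ?thesis by (rule tf_cong) (simp add: bitC_def Let_def)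
qed

section \<open>Self-delimiting codes\<close>

definition code :: "nat \<Rightarrow> bool list" where
  "code k = replicate (lenC k) True @ False # dec k"

lemma length_code: "length (code k) = 2 * lenC k + 1"
  by (simp add: code_def lenC_def)

definition lead :: "bool list \<Rightarrow> nat" where
  "lead q = (LEAST i. \<not> (i < length q \<and> q ! i))"

definition parse :: "bool list \<Rightarrow> nat \<times> bool list" where
  "parse q = (let L = lead q in (enc (take L (drop (Suc L) q)), drop (Suc (L + L)) q))"

lemma lead_code: "lead (code k @ r) = lenC k"
  unfolding lead_def
proof (rule Least_equality)
  show "\<not> (lenC k < length (code k @ r) \<and> (code k @ r) ! lenC k)"
    by (simp add: code_def nth_append)
  fix y assume "\<not> (y < length (code k @ r) \<and> (code k @ r) ! y)"
  then show "lenC k \<le> y"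
    by (cases "y < lenC k") (auto simp: code_def nth_append)
qed

lemma parse_code: "parse (code k @ r) = (k, r)"
proof -
  have d: "drop (Suc (lenC k)) (code k @ r) = dec k @ r" by (simp add: code_def)
  have "drop (Suc (lenC k + lenC k)) (code k @ r) = r"
  proof -
    have e: "Suc (lenC k + lenC k) = lenC k + Suc (lenC k)" by simp
    have "drop (Suc (lenC k + lenC k)) (code k @ r) = drop (lenC k) (drop (Suc (lenC k)) (code k @ r))"
      unfolding drop_drop e ..
    also have "\<dots> = r" unfolding d by (simp add: lenC_def)
    finally show ?thesis .
  qed
  then show ?thesis unfolding parse_def Let_def lead_code d by (simp add: lenC_def)
qed

lemma tf_lead: "tf n a \<Longrightarrow> tf n (\<lambda>xs. lead (dec (a xs)))"
proof -
  assume a: "tf n a"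
  have "tf n (\<lambda>xs. LEAST i. \<not> (i < lenC (a xs) \<and> bitC i (a xs) = 1))"
  proof (rule tf_search'[where P = "\<lambda>i xs. \<not> (i < lenC (a xs) \<and> bitC i (a xs) = 1)"])
    show "tf (Suc n) (\<lambda>ys. if \<not> (hd ys < lenC (a (tl ys)) \<and> bitC (hd ys) (a (tl ys)) = 1) then 1 else 0)"
      by (rule tp_not[OF tp_and[OF tp_less[OF tf_hd tf_lenC[OF tf_drop1[OF a]]] tp_eq[OF tf_bitC[OF tf_hd tf_drop1[OF a]] tf_const]]])
    fix xs show "\<exists>i. \<not> (i < lenC (a xs) \<and> bitC i (a xs) = 1)" by auto
  qed
  then show ?thesis
  proof (rule tf_cong)
    fix xs :: "nat list"
    have "\<And>i. (i < lenC (a xs) \<and> bitC i (a xs) = 1) = (i < length (dec (a xs)) \<and> dec (a xs) ! i)"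
      using bitC_correct[of _ "dec (a xs)"] by (auto simp: lenC_def split: if_splits)
    then show "(LEAST i. \<not> (i < lenC (a xs) \<and> bitC i (a xs) = 1)) = lead (dec (a xs))"
      unfolding lead_def by simp
  qed
qed

lemma tf_parse1: "tf n a \<Longrightarrow> tf n (\<lambda>xs. fst (parse (dec (a xs))))"
proof -
  assume a: "tf n a"
  have L: "tf n (\<lambda>xs. lead (dec (a xs)))" by (rule tf_lead[OF a])
  have "tf n (\<lambda>xs. enc (take (lead (dec (a xs))) (dec (enc (drop (Suc (lead (dec (a xs)))) (dec (a xs)))))))"
    by (rule tf_takeC[OF L tf_dropC[OF tf_Suc[OF L] a]])
  then show ?thesis by (rule tf_cong) (simp add: parse_def Let_def)
qed

lemma tf_parse2: "tf n a \<Longrightarrow> tf n (\<lambda>xs. enc (snd (parse (dec (a xs)))))"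
proof -
  assume a: "tf n a"
  have L: "tf n (\<lambda>xs. lead (dec (a xs)))" by (rule tf_lead[OF a])
  have "tf n (\<lambda>xs. enc (drop (Suc (lead (dec (a xs)) + lead (dec (a xs)))) (dec (a xs))))"
    by (rule tf_dropC[OF tf_Suc[OF tf_add[OF L L]] a])
  then show ?thesis by (rule tf_cong) (simp add: parse_def Let_def)
qed

definition bin :: "nat \<Rightarrow> nat \<Rightarrow> bool list" where
  "bin L x = dec (2 ^ L + x - 1)"

definition val :: "bool list \<Rightarrow> nat" where
  "val w = enc w + 1 - 2 ^ length w"

lemma bin_props: "x < 2 ^ L \<Longrightarrow> length (bin L x) = L \<and> val (bin L x) = x"
proof -
  assume x: "x < 2 ^ L"
  let ?m = "2 ^ L + x - 1"
  have p: "(1::nat) \<le> 2 ^ L" by simp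
  have m1: "?m + 1 = 2 ^ L + x" using p by simp
  have b: "2 ^ length (dec ?m) \<le> ?m + 1 \<and> ?m + 1 < 2 ^ Suc (length (dec ?m))"
    using enc_bounds[of "dec ?m"] by simp
  have "length (dec ?m) = L"
  proof -
    have "(2::nat) ^ length (dec ?m) < 2 ^ Suc L" using b m1 x by simp
    then have l1: "length (dec ?m) < Suc L" using power_strict_increasing_iff[of "2::nat" "length (dec ?m)" "Suc L"] by simp
    have "(2::nat) ^ L < 2 ^ Suc (length (dec ?m))" using b m1 by linarith
    then have "L < Suc (length (dec ?m))" using power_strict_increasing_iff[of "2::nat" L "Suc (length (dec ?m))"] by simp
    then show ?thesis using l1 by simp
  qed
  then show ?thesis unfolding bin_def val_def using m1 by simp
qed

lemma tf_val: "tf n a \<Longrightarrow> tf n (\<lambda>xs. val (dec (a xs)))"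
proof -
  assume a: "tf n a"
  have "tf n (\<lambda>xs. a xs + 1 - 2 ^ lenC (a xs))" by (rule tf_sub[OF tf_add[OF a tf_const] tf_pow[OF tf_const tf_lenC[OF a]]])
  then show ?thesis by (rule tf_cong) (simp add: val_def lenC_def)
qed

lemma computable1_I:
  assumes "pf 1 (\<lambda>xs. map_option enc (V (dec (xs ! 0))))"
  shows "computable1 V"
proof -
  obtain r where r: "\<forall>xs. length xs = 1 \<longrightarrow> (\<forall>y. eval r xs y \<longleftrightarrow> map_option enc (V (dec (xs ! 0))) = Some y)"
    using assms unfolding pf_def by blast
  show ?thesis unfolding computable1_def
  proof (intro exI[of _ r] allI)
    fix p w
    have "eval r [enc p] (enc w) \<longleftrightarrow> map_option enc (V p) = Some (enc w)" using r[rule_format, of "[enc p]"] by simp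
    also have "\<dots> \<longleftrightarrow> V p = Some w" using enc_inj by (cases "V p") auto
    finally show "eval r [enc p] (enc w) \<longleftrightarrow> V p = Some w" .
  qed
qed

lemma computable2_I:
  assumes "pf 2 (\<lambda>xs. map_option enc (V (dec (xs ! 0)) (dec (xs ! 1))))"
  shows "computable2 V"
proof -
  obtain r where r: "\<forall>xs. length xs = 2 \<longrightarrow> (\<forall>y. eval r xs y \<longleftrightarrow> map_option enc (V (dec (xs ! 0)) (dec (xs ! 1))) = Some y)"
    using assms unfolding pf_def by blast
  show ?thesis unfolding computable2_def
  proof (intro exI[of _ r] allI)
    fix p v w
    have "eval r [enc p, enc v] (enc w) \<longleftrightarrow> map_option enc (V p v) = Some (enc w)" using r[rule_format, of "[enc p, enc v]"] by simp
    also have "\<dots> \<longleftrightarrow> V p v = Some w" using enc_inj by (cases "V p v") auto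
    finally show "eval r [enc p, enc v] (enc w) \<longleftrightarrow> V p v = Some w" .
  qed
qed

lemma list1_cases: "length xs = 1 \<Longrightarrow> xs = [xs ! 0]"
  by (cases xs) auto

lemma list2_cases: "length xs = 2 \<Longrightarrow> xs = [xs ! 0, xs ! 1]"
  by (cases xs; cases "tl xs") auto

lemma dec_iff: "(a = dec y) = (enc a = y)"
  by (metis enc_dec dec_enc)

lemma pf_U1:
  assumes "computable1 U"
  shows "pf 1 (\<lambda>xs. map_option enc (U (dec (xs ! 0))))"
proof -
  obtain r where r: "\<forall>p w. eval r [enc p] (enc w) \<longleftrightarrow> U p = Some w" using assms unfolding computable1_def by blast
  show ?thesis unfolding pf_def
  proof (intro exI[of _ r] allI impI)
    fix xs :: "nat list" and y assume "length xs = 1"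
    then have xs: "xs = [enc (dec (xs ! 0))]" using list1_cases by simp
    have "eval r xs y \<longleftrightarrow> eval r [enc (dec (xs ! 0))] (enc (dec y))" using xs by simp
    also have "\<dots> \<longleftrightarrow> U (dec (xs ! 0)) = Some (dec y)" using r by blast
    also have "\<dots> \<longleftrightarrow> map_option enc (U (dec (xs ! 0))) = Some y"
      by (cases "U (dec (xs ! 0))") (auto simp: dec_iff)
    finally show "eval r xs y \<longleftrightarrow> map_option enc (U (dec (xs ! 0))) = Some y" .
  qed
qed

lemma pf_W2:
  assumes "computable2 W"
  shows "pf 2 (\<lambda>xs. map_option enc (W (dec (xs ! 0)) (dec (xs ! 1))))"
proof -
  obtain r where r: "\<forall>p v w. eval r [enc p, enc v] (enc w) \<longleftrightarrow> W p v = Some w" using assms unfolding computable2_def by blast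
  show ?thesis unfolding pf_def
  proof (intro exI[of _ r] allI impI)
    fix xs :: "nat list" and y assume "length xs = 2"
    then have xs: "xs = [enc (dec (xs ! 0)), enc (dec (xs ! 1))]" using list2_cases by simp
    have "eval r xs y \<longleftrightarrow> eval r [enc (dec (xs ! 0)), enc (dec (xs ! 1))] (enc (dec y))" using xs by simp
    also have "\<dots> \<longleftrightarrow> W (dec (xs ! 0)) (dec (xs ! 1)) = Some (dec y)" using r by blast
    also have "\<dots> \<longleftrightarrow> map_option enc (W (dec (xs ! 0)) (dec (xs ! 1))) = Some y"
      by (cases "W (dec (xs ! 0)) (dec (xs ! 1))") (auto simp: dec_iff)
    finally show "eval r xs y \<longleftrightarrow> map_option enc (W (dec (xs ! 0)) (dec (xs ! 1))) = Some y" .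
  qed
qed

lemma pf_U_app:
  assumes "computable1 U" "tf n a"
  shows "pf n (\<lambda>xs. map_option enc (U (dec (a xs))))"
  using pf_comp_tot[OF pf_U1[OF assms(1)], of "[a]" n] assms(2) by simp

lemma pf_W_app:
  assumes "computable2 W" "tf n a" "tf n b"
  shows "pf n (\<lambda>xs. map_option enc (W (dec (a xs)) (dec (b xs))))"
  using pf_comp_tot[OF pf_W2[OF assms(1)], of "[a, b]" n] assms(2,3) by simp

lemma pf_map:
  assumes "pf n A" "tf (Suc n) f"
  shows "pf n (\<lambda>xs. map_option (\<lambda>v. f (v # xs)) (A xs))"
  using pf_bind[OF assms(1) assms(2)] by (rule pf_cong) (auto split: option.splits)

section \<open>Kolmogorov complexity basics\<close>

lemma KP_le: "U p = Some u \<Longrightarrow> KP U u \<le> length p"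
  unfolding KP_def by (rule Least_le) blast

lemma KC_le: "W p v = Some u \<Longrightarrow> KC W u v \<le> length p"
  unfolding KC_def by (rule Least_le) blast

lemma univ1_bound:
  assumes "universal1 U" "computable1 V"
  shows "\<exists>c. \<forall>p u. V p = Some u \<longrightarrow> KP U u \<le> length p + c"
proof -
  obtain c where c: "\<forall>p u. V p = Some u \<longrightarrow> (\<exists>q. U q = Some u \<and> length q \<le> length p + c)"
    using assms unfolding universal1_def by blast
  show ?thesis using c KP_le by (meson order.trans)
qed

lemma univ2_bound:
  assumes "universal2 W" "computable2 V"
  shows "\<exists>c. \<forall>p v u. V p v = Some u \<longrightarrow> KC W u v \<le> length p + c"
proof -
  obtain c where c: "\<forall>p v u. V p v = Some u \<longrightarrow> (\<exists>q. W q v = Some u \<and> length q \<le> length p + c)"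
    using assms unfolding universal2_def by blast
  show ?thesis using c KC_le by (meson order.trans)
qed

lemma comp1_id: "computable1 (\<lambda>p. Some p)"
  by (rule computable1_I) (simp add: tf_proj)

lemma comp2_id: "computable2 (\<lambda>p v. Some p)"
  by (rule computable2_I) (simp add: tf_proj)

lemma KP_ex:
  assumes "universal1 U"
  shows "\<exists>p. U p = Some u \<and> length p = KP U u"
proof -
  obtain c where "\<forall>p u. Some p = Some u \<longrightarrow> (\<exists>q. U q = Some u \<and> length q \<le> length p + c)"
    using assms comp1_id unfolding universal1_def by blast
  then obtain q where "U q = Some u" by blast
  then have "\<exists>n p. length p = n \<and> U p = Some u" by blast
  then have "\<exists>p. length p = (LEAST n. \<exists>p. length p = n \<and> U p = Some u) \<and> U p = Some u" by (rule LeastI_ex)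
  then show ?thesis unfolding KP_def by blast
qed

lemma KC_ex:
  assumes "universal2 W"
  shows "\<exists>p. W p v = Some u \<and> length p = KC W u v"
proof -
  obtain c where "\<forall>p v u. Some p = Some u \<longrightarrow> (\<exists>q. W q v = Some u \<and> length q \<le> length p + c)"
    using assms comp2_id unfolding universal2_def by blast
  then obtain q where "W q v = Some u" by blast
  then have "\<exists>n p. length p = n \<and> W p v = Some u" by blast
  then have "\<exists>p. length p = (LEAST n. \<exists>p. length p = n \<and> W p v = Some u) \<and> W p v = Some u" by (rule LeastI_ex)
  then show ?thesis unfolding KC_def by blast
qed

lemma KP_upper:
  assumes "universal1 U"
  shows "\<exists>c. \<forall>u. KP U u \<le> length u + c"
  using univ1_bound[OF assms comp1_id] by auto

lemma univ2_comp: "universal2 W \<Longrightarrow> computable2 W" by (simp add: universal2_def)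
lemma univ1_comp: "universal1 U \<Longrightarrow> computable1 U" by (simp add: universal1_def)

lemma tf_drop1_2: "tf 1 a \<Longrightarrow> tf 2 (\<lambda>ys. a (tl ys))"
  using tf_drop1[of 1 a] by (simp add: numeral_2_eq_2)

lemma pf_bind1: "pf 1 A \<Longrightarrow> pf 2 B \<Longrightarrow> pf 1 (\<lambda>xs. case A xs of None \<Rightarrow> None | Some a \<Rightarrow> B (a # xs))"
  using pf_bind[of 1 A B] by (simp add: numeral_2_eq_2)

lemma tp0: "tf 2 (\<lambda>xs. xs ! 0)" by (rule tf_proj) simp
lemma tp1: "tf 2 (\<lambda>xs. xs ! 1)" by (rule tf_proj) simp
lemma tq0: "tf 1 (\<lambda>xs. xs ! 0)" by (rule tf_proj) simp

definition M1r :: "(bool list \<Rightarrow> bool list \<Rightarrow> bool list option) \<Rightarrow> bool list \<Rightarrow> bool list \<Rightarrow> bool list option" where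
  "M1r W q z = W (snd (parse q)) (take (length z - fst (parse q)) z)"

definition M1l :: "(bool list \<Rightarrow> bool list \<Rightarrow> bool list option) \<Rightarrow> bool list \<Rightarrow> bool list \<Rightarrow> bool list option" where
  "M1l W q z = W (snd (parse q)) (drop (fst (parse q)) z)"

lemma comp_M1r: "computable2 W \<Longrightarrow> computable2 (M1r W)"
proof (rule computable2_I)
  assume W: "computable2 W"
  have "pf 2 (\<lambda>xs. map_option enc (W (dec (enc (snd (parse (dec (xs ! 0))))))
      (dec (enc (take (lenC (xs ! 1) - fst (parse (dec (xs ! 0)))) (dec (xs ! 1)))))))"
    by (rule pf_W_app[OF W tf_parse2[OF tp0] tf_takeC[OF tf_sub[OF tf_lenC[OF tp1] tf_parse1[OF tp0]] tp1]])
  then show "pf 2 (\<lambda>xs. map_option enc (M1r W (dec (xs ! 0)) (dec (xs ! 1))))"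
    by (rule pf_cong) (simp add: M1r_def lenC_def)
qed

lemma comp_M1l: "computable2 W \<Longrightarrow> computable2 (M1l W)"
proof (rule computable2_I)
  assume W: "computable2 W"
  have "pf 2 (\<lambda>xs. map_option enc (W (dec (enc (snd (parse (dec (xs ! 0))))))
      (dec (enc (drop (fst (parse (dec (xs ! 0)))) (dec (xs ! 1)))))))"
    by (rule pf_W_app[OF W tf_parse2[OF tp0] tf_dropC[OF tf_parse1[OF tp0] tp1]])
  then show "pf 2 (\<lambda>xs. map_option enc (M1l W (dec (xs ! 0)) (dec (xs ! 1))))"
    by (rule pf_cong) (simp add: M1l_def)
qed

lemma KC_extend_right:
  assumes "universal2 W"
  shows "\<exists>c. \<forall>u v w. KC W u (v @ w) \<le> KC W u v + 2 * lenC (length w) + c"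
proof -
  obtain c where c: "\<forall>p v u. M1r W p v = Some u \<longrightarrow> KC W u v \<le> length p + c"
    using univ2_bound[OF assms comp_M1r[OF univ2_comp[OF assms]]] by blast
  show ?thesis
  proof (intro exI[of _ "c + 1"] allI)
    fix u v w
    obtain p where p: "W p v = Some u" "length p = KC W u v" using KC_ex[OF assms] by blast
    have "M1r W (code (length w) @ p) (v @ w) = Some u" using p by (simp add: M1r_def parse_code)
    then have "KC W u (v @ w) \<le> length (code (length w) @ p) + c" using c by blast
    then show "KC W u (v @ w) \<le> KC W u v + 2 * lenC (length w) + (c + 1)" using p by (simp add: length_code)
  qed
qed

lemma KC_extend_left:
  assumes "universal2 W"
  shows "\<exists>c. \<forall>u v w. KC W u (w @ v) \<le> KC W u v + 2 * lenC (length w) + c"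
proof -
  obtain c where c: "\<forall>p v u. M1l W p v = Some u \<longrightarrow> KC W u v \<le> length p + c"
    using univ2_bound[OF assms comp_M1l[OF univ2_comp[OF assms]]] by blast
  show ?thesis
  proof (intro exI[of _ "c + 1"] allI)
    fix u v w
    obtain p where p: "W p v = Some u" "length p = KC W u v" using KC_ex[OF assms] by blast
    have "M1l W (code (length w) @ p) (w @ v) = Some u" using p by (simp add: M1l_def parse_code)
    then have "KC W u (w @ v) \<le> length (code (length w) @ p) + c" using c by blast
    then show "KC W u (w @ v) \<le> KC W u v + 2 * lenC (length w) + (c + 1)" using p by (simp add: length_code)
  qed
qed

definition M2 :: "(bool list \<Rightarrow> bool list option) \<Rightarrow> bool list \<Rightarrow> bool list option" where
  "M2 U q = (case U (take (fst (parse q)) (snd (parse q))) of None \<Rightarrow> None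
     | Some a \<Rightarrow> map_option (\<lambda>b. a @ b) (U (drop (fst (parse q)) (snd (parse q)))))"

lemma comp_M2: "computable1 U \<Longrightarrow> computable1 (M2 U)"
proof (rule computable1_I)
  assume U: "computable1 U"
  let ?T = "\<lambda>xs. enc (take (fst (parse (dec (xs ! 0)))) (dec (enc (snd (parse (dec (xs ! 0)))))))"
  let ?D = "\<lambda>xs. enc (drop (fst (parse (dec (xs ! 0)))) (dec (enc (snd (parse (dec (xs ! 0)))))))"
  have T: "tf 1 ?T" by (rule tf_takeC[OF tf_parse1[OF tq0] tf_parse2[OF tq0]])
  have D: "tf 1 ?D" by (rule tf_dropC[OF tf_parse1[OF tq0] tf_parse2[OF tq0]])
  have A: "pf 1 (\<lambda>xs. map_option enc (U (dec (?T xs))))" by (rule pf_U_app[OF U T])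
  have B0: "pf 2 (\<lambda>ys. map_option enc (U (dec (?D (tl ys)))))" by (rule pf_U_app[OF U tf_drop1_2[OF D]])
  have f: "tf 3 (\<lambda>zs. enc (dec (zs ! 1) @ dec (zs ! 0)))" by (rule tf_appC; rule tf_proj; simp)
  have B: "pf 2 (\<lambda>ys. map_option (\<lambda>v. enc (dec ((v # ys) ! 1) @ dec ((v # ys) ! 0))) (map_option enc (U (dec (?D (tl ys))))))"
    by (rule pf_map[OF B0]) (use f in \<open>simp add: numeral_eq_Suc\<close>)
  have "pf 1 (\<lambda>xs. case map_option enc (U (dec (?T xs))) of None \<Rightarrow> None
     | Some a \<Rightarrow> map_option (\<lambda>v. enc (dec (((v # a # xs)) ! 1) @ dec ((v # a # xs) ! 0))) (map_option enc (U (dec (?D (tl (a # xs)))))))"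
    by (rule pf_bind1[OF A B])
  then show "pf 1 (\<lambda>xs. map_option enc (M2 U (dec (xs ! 0))))"
    by (rule pf_cong) (auto simp: M2_def option.map_comp comp_def split: option.splits)
qed

lemma KP_concat:
  assumes "universal1 U"
  shows "\<exists>c. \<forall>v w. KP U (v @ w) \<le> KP U v + KP U w + 2 * lenC (KP U v) + c"
proof -
  obtain c where c: "\<forall>p u. M2 U p = Some u \<longrightarrow> KP U u \<le> length p + c"
    using univ1_bound[OF assms comp_M2[OF univ1_comp[OF assms]]] by blast
  show ?thesis
  proof (intro exI[of _ "c + 1"] allI)
    fix v w
    obtain p1 where p1: "U p1 = Some v" "length p1 = KP U v" using KP_ex[OF assms] by blast
    obtain p2 where p2: "U p2 = Some w" "length p2 = KP U w" using KP_ex[OF assms] by blast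
    have "M2 U (code (length p1) @ p1 @ p2) = Some (v @ w)" using p1 p2 by (simp add: M2_def parse_code)
    then have "KP U (v @ w) \<le> length (code (length p1) @ p1 @ p2) + c" using c by blast
    then show "KP U (v @ w) \<le> KP U v + KP U w + 2 * lenC (KP U v) + (c + 1)" using p1 p2 by (simp add: length_code)
  qed
qed

definition M3 :: "(bool list \<Rightarrow> bool list option) \<Rightarrow> (bool list \<Rightarrow> bool list \<Rightarrow> bool list option) \<Rightarrow> bool list \<Rightarrow> bool list option" where
  "M3 U W q = (let m1 = fst (parse q); q1 = snd (parse q); m2 = fst (parse q1); q2 = snd (parse q1) in
     case U (take m1 q2) of None \<Rightarrow> None
     | Some z \<Rightarrow> map_option (\<lambda>w. take m2 z @ w @ drop m2 z) (W (drop m1 q2) z))"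

lemma comp_M3: "computable1 U \<Longrightarrow> computable2 W \<Longrightarrow> computable1 (M3 U W)"
proof (rule computable1_I)
  assume U: "computable1 U" and W: "computable2 W"
  let ?Q1 = "\<lambda>xs. enc (snd (parse (dec (xs ! 0))))"
  let ?M1 = "\<lambda>xs. fst (parse (dec (xs ! 0)))"
  let ?M2 = "\<lambda>xs. fst (parse (dec (?Q1 xs)))"
  let ?Q2 = "\<lambda>xs. enc (snd (parse (dec (?Q1 xs))))"
  have Q1: "tf 1 ?Q1" by (rule tf_parse2[OF tq0])
  have M1: "tf 1 ?M1" by (rule tf_parse1[OF tq0])
  have M2: "tf 1 ?M2" by (rule tf_parse1[OF Q1])
  have Q2: "tf 1 ?Q2" by (rule tf_parse2[OF Q1])
  let ?T = "\<lambda>xs. enc (take (?M1 xs) (dec (?Q2 xs)))"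
  let ?D = "\<lambda>xs. enc (drop (?M1 xs) (dec (?Q2 xs)))"
  have T: "tf 1 ?T" by (rule tf_takeC[OF M1 Q2])
  have D: "tf 1 ?D" by (rule tf_dropC[OF M1 Q2])
  have A: "pf 1 (\<lambda>xs. map_option enc (U (dec (?T xs))))" by (rule pf_U_app[OF U T])
  have B0: "pf 2 (\<lambda>ys. map_option enc (W (dec (?D (tl ys))) (dec (ys ! 0))))"
    by (rule pf_W_app[OF W tf_drop1_2[OF D] tp0])
  have f: "tf 3 (\<lambda>zs. enc (dec (enc (take (?M2 (drop 2 zs)) (dec (zs ! 1)))) @ dec (enc (dec (zs ! 0) @ dec (enc (drop (?M2 (drop 2 zs)) (dec (zs ! 1))))))))"
  proof -
    have m: "tf 3 (\<lambda>zs. ?M2 (drop 2 zs))" using tf_drop2[OF M2] by (simp add: numeral_eq_Suc)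
    have z1: "tf 3 (\<lambda>zs. zs ! 1)" by (rule tf_proj) simp
    have z0: "tf 3 (\<lambda>zs. zs ! 0)" by (rule tf_proj) simp
    show ?thesis by (rule tf_appC[OF tf_takeC[OF m z1] tf_appC[OF z0 tf_dropC[OF m z1]]])
  qed
  have B: "pf 2 (\<lambda>ys. map_option (\<lambda>v. (\<lambda>zs. enc (dec (enc (take (?M2 (drop 2 zs)) (dec (zs ! 1)))) @ dec (enc (dec (zs ! 0) @ dec (enc (drop (?M2 (drop 2 zs)) (dec (zs ! 1)))))))) (v # ys))
      (map_option enc (W (dec (?D (tl ys))) (dec (ys ! 0)))))"
    by (rule pf_map[OF B0]) (use f in \<open>simp add: numeral_eq_Suc\<close>)
  have "pf 1 (\<lambda>xs. case map_option enc (U (dec (?T xs))) of None \<Rightarrow> None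
     | Some a \<Rightarrow> map_option (\<lambda>v. (\<lambda>zs. enc (dec (enc (take (?M2 (drop 2 zs)) (dec (zs ! 1)))) @ dec (enc (dec (zs ! 0) @ dec (enc (drop (?M2 (drop 2 zs)) (dec (zs ! 1)))))))) (v # a # xs))
      (map_option enc (W (dec (?D (tl (a # xs)))) (dec ((a # xs) ! 0)))))"
    by (rule pf_bind1[OF A B])
  then show "pf 1 (\<lambda>xs. map_option enc (M3 U W (dec (xs ! 0))))"
    by (rule pf_cong) (auto simp: M3_def Let_def numeral_eq_Suc option.map_comp comp_def split: option.splits)
qed

lemma KP_insert:
  assumes "universal1 U" "universal2 W"
  shows "\<exists>c. \<forall>a u b. KP U (a @ u @ b) \<le> KP U (a @ b) + KC W u (a @ b) + 2 * lenC (KP U (a @ b)) + 2 * lenC (length a) + c"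
proof -
  obtain c where c: "\<forall>p u. M3 U W p = Some u \<longrightarrow> KP U u \<le> length p + c"
    using univ1_bound[OF assms(1) comp_M3[OF univ1_comp[OF assms(1)] univ2_comp[OF assms(2)]]] by blast
  show ?thesis
  proof (intro exI[of _ "c + 2"] allI)
    fix a u b
    obtain p1 where p1: "U p1 = Some (a @ b)" "length p1 = KP U (a @ b)" using KP_ex[OF assms(1)] by blast
    obtain p2 where p2: "W p2 (a @ b) = Some u" "length p2 = KC W u (a @ b)" using KC_ex[OF assms(2)] by blast
    have "M3 U W (code (length p1) @ code (length a) @ p1 @ p2) = Some (a @ u @ b)"
      using p1 p2 by (simp add: M3_def parse_code Let_def)
    then have "KP U (a @ u @ b) \<le> length (code (length p1) @ code (length a) @ p1 @ p2) + c" using c by blast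
    then show "KP U (a @ u @ b) \<le> KP U (a @ b) + KC W u (a @ b) + 2 * lenC (KP U (a @ b)) + 2 * lenC (length a) + (c + 2)"
      using p1 p2 by (simp add: length_code)
  qed
qed

section \<open>Pairing\<close>

definition pr :: "nat \<Rightarrow> nat \<Rightarrow> nat" where "pr a s = 2 ^ a * (2 * s + 1) - 1"
definition pa :: "nat \<Rightarrow> nat" where "pa t = (LEAST a. (t + 1) mod 2 ^ Suc a \<noteq> 0)"
definition ps :: "nat \<Rightarrow> nat" where "ps t = ((t + 1) div 2 ^ pa t) div 2"

lemma pr1: "pr a s + 1 = 2 ^ a * (2 * s + 1)"
  unfolding pr_def by (simp add: Suc_leI)

lemma pa_pr[simp]: "pa (pr a s) = a"
  unfolding pa_def pr1
proof (rule Least_equality)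
  show "2 ^ a * (2 * s + 1) mod 2 ^ Suc a \<noteq> 0"
  proof
    assume "2 ^ a * (2 * s + 1) mod 2 ^ Suc a = 0"
    then have "2 ^ Suc a dvd 2 ^ a * (2 * s + 1)" by (simp only: dvd_eq_mod_eq_0)
    then have "2 ^ a * 2 dvd 2 ^ a * (2 * s + 1)" by (simp only: power_Suc2)
    then have "(2::nat) dvd 2 * s + 1" by (metis dvd_mult_cancel zero_less_numeral zero_less_power)
    then show False by simp
  qed
  fix y assume h: "2 ^ a * (2 * s + 1) mod 2 ^ Suc y \<noteq> 0"
  show "a \<le> y"
  proof (rule ccontr)
    assume "\<not> a \<le> y"
    then have "Suc y \<le> a" by simp
    then have "(2::nat) ^ Suc y dvd 2 ^ a" by (rule le_imp_power_dvd)
    then have "(2::nat) ^ Suc y dvd 2 ^ a * (2 * s + 1)" by simp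
    then show False using h by simp
  qed
qed

lemma ps_pr[simp]: "ps (pr a s) = s"
  unfolding ps_def pa_pr pr1 by simp

lemma pa_ex: "(t + 1) mod 2 ^ Suc (t + 1) \<noteq> 0"
proof -
  have "t + 1 < 2 ^ (t + 1)" by (rule less_exp)
  also have "(2::nat) ^ (t + 1) \<le> 2 ^ Suc (t + 1)" by (rule power_increasing) simp_all
  finally show ?thesis by simp
qed

lemma pr_pa_ps[simp]: "pr (pa t) (ps t) = t"
proof -
  let ?a = "pa t"
  have ex: "(t + 1) mod 2 ^ Suc (t + 1) \<noteq> 0" by (rule pa_ex)
  have na: "(t + 1) mod 2 ^ Suc ?a \<noteq> 0" unfolding pa_def by (rule LeastI[of "\<lambda>a. (t + 1) mod 2 ^ Suc a \<noteq> 0", OF ex])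
  have da: "2 ^ ?a dvd (t + 1)"
  proof (cases ?a)
    case 0 then show ?thesis by simp
  next
    case (Suc a')
    have "a' < ?a" using Suc by simp
    then have "\<not> (t + 1) mod 2 ^ Suc a' \<noteq> 0" unfolding pa_def by (rule not_less_Least)
    then show ?thesis using Suc by auto
  qed
  then obtain q where q: "t + 1 = 2 ^ ?a * q" by blast
  have "odd q"
  proof
    assume "even q"
    then obtain q' where "q = 2 * q'" by blast
    then have "(t + 1) mod 2 ^ Suc ?a = 0" using q by (simp add: mult.commute mult.left_commute)
    then show False using na by simp
  qed
  then have q2: "2 * (q div 2) + 1 = q" by simp
  have "ps t = q div 2" unfolding ps_def using q by simp
  then show ?thesis unfolding pr_def using q q2 by simp
qed

lemma pr_inj: "pr a s = pr a' s' \<Longrightarrow> a = a' \<and> s = s'"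
  by (metis pa_pr ps_pr)

lemma tf_pa: "tf n t \<Longrightarrow> tf n (\<lambda>xs. pa (t xs))"
proof -
  assume t: "tf n t"
  have "tf n (\<lambda>xs. LEAST a. (t xs + 1) mod 2 ^ Suc a \<noteq> 0)"
  proof (rule tf_search'[where P = "\<lambda>a xs. (t xs + 1) mod 2 ^ Suc a \<noteq> 0"])
    show "tf (Suc n) (\<lambda>ys. if (t (tl ys) + 1) mod 2 ^ Suc (hd ys) \<noteq> 0 then 1 else 0)"
      by (rule tp_not[OF tp_eq[OF tf_mod[OF tf_add[OF tf_drop1[OF t] tf_const] tf_pow[OF tf_const tf_Suc[OF tf_hd]]] tf_const]])
    fix xs
    show "\<exists>a. (t xs + 1) mod 2 ^ Suc a \<noteq> 0"
      using pa_ex by blast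
  qed
  then show ?thesis by (rule tf_cong) (simp add: pa_def)
qed

lemma tf_ps: "tf n t \<Longrightarrow> tf n (\<lambda>xs. ps (t xs))"
proof -
  assume t: "tf n t"
  have "tf n (\<lambda>xs. ((t xs + 1) div 2 ^ pa (t xs)) div 2)"
    by (rule tf_div[OF tf_div[OF tf_add[OF t tf_const] tf_pow[OF tf_const tf_pa[OF t]]] tf_const])
  then show ?thesis by (rule tf_cong) (simp add: ps_def)
qed

definition clkU :: "recf \<Rightarrow> nat \<Rightarrow> nat \<Rightarrow> nat" where "clkU r s a = enco (evb r s [a])"
definition hvN :: "recf \<Rightarrow> nat \<Rightarrow> nat \<Rightarrow> bool" where
  "hvN r k t = (lenC (pa t) \<le> k \<and> clkU r (ps t) (pa t) \<noteq> 0 \<and> (ps t = 0 \<or> clkU r (ps t - 1) (pa t) = 0))"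
definition outN :: "recf \<Rightarrow> nat \<Rightarrow> nat" where "outN r t = clkU r (ps t) (pa t) - 1"
definition RN :: "recf \<Rightarrow> nat \<Rightarrow> nat \<Rightarrow> nat \<Rightarrow> nat \<Rightarrow> bool" where
  "RN r k n x t = (hvN r k t \<and> n \<le> lenC (outN r t) \<and> enc (take n (dec (outN r t))) = x)"
definition cntN :: "recf \<Rightarrow> nat \<Rightarrow> nat \<Rightarrow> nat \<Rightarrow> nat \<Rightarrow> nat" where
  "cntN r k n x T = (\<Sum>t<T. if RN r k n x t then 1 else 0)"
definition BN :: "recf \<Rightarrow> nat \<Rightarrow> nat \<Rightarrow> nat \<Rightarrow> nat \<Rightarrow> bool" where
  "BN r k m n t = (hvN r k t \<and> n \<le> lenC (outN r t) \<and> cntN r k n (enc (take n (dec (outN r t)))) (Suc t) = 2 ^ m)"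
definition cntB :: "recf \<Rightarrow> nat \<Rightarrow> nat \<Rightarrow> nat \<Rightarrow> nat \<Rightarrow> nat" where
  "cntB r k m n T = (\<Sum>t<T. if BN r k m n t then 1 else 0)"

definition M4 :: "recf \<Rightarrow> bool list \<Rightarrow> bool list \<Rightarrow> bool list option" where
  "M4 r q vz = (let k = fst (parse q); idx = val (snd (parse q)); n = length vz in
     if \<exists>T. idx < cntN r k n (enc vz) (Suc T)
     then Some (drop n (dec (outN r (LEAST T. idx < cntN r k n (enc vz) (Suc T))))) else None)"

definition M5 :: "recf \<Rightarrow> bool list \<Rightarrow> bool list option" where
  "M5 r q = (let k = fst (parse q); q1 = snd (parse q); m = fst (parse q1); q2 = snd (parse q1);
     n = fst (parse q2); idx = val (snd (parse q2)) in
     if \<exists>T. idx < cntB r k m n (Suc T)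
     then Some (take n (dec (outN r (LEAST T. idx < cntB r k m n (Suc T))))) else None)"

lemma tf_clkU: "tf n s \<Longrightarrow> tf n a \<Longrightarrow> tf n (\<lambda>xs. clkU r (s xs) (a xs))"
proof -
  assume s: "tf n s" and a: "tf n a"
  have "tf n (\<lambda>xs. (\<lambda>ys. enco (evb r (hd ys) (tl ys))) (map (\<lambda>g. g xs) [s, a]))"
    by (rule tf_comp[OF tf_clock[of 1 r]]) (use s a in auto)
  then show ?thesis by (rule tf_cong) (simp add: clkU_def)
qed

lemma tp_hvN: "tf n k \<Longrightarrow> tf n t \<Longrightarrow> tf n (\<lambda>xs. if hvN r (k xs) (t xs) then 1 else 0)"
proof -
  assume k: "tf n k" and t: "tf n t"
  have pa: "tf n (\<lambda>xs. pa (t xs))" by (rule tf_pa[OF t])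
  have ps: "tf n (\<lambda>xs. ps (t xs))" by (rule tf_ps[OF t])
  have "tf n (\<lambda>xs. if lenC (pa (t xs)) \<le> k xs \<and> \<not> clkU r (ps (t xs)) (pa (t xs)) = 0 \<and> (ps (t xs) = 0 \<or> clkU r (ps (t xs) - 1) (pa (t xs)) = 0) then 1 else 0)"
    by (rule tp_and[OF tp_le[OF tf_lenC[OF pa] k] tp_and[OF tp_not[OF tp_eq[OF tf_clkU[OF ps pa] tf_const]] tp_or[OF tp_eq[OF ps tf_const] tp_eq[OF tf_clkU[OF tf_pred[OF ps] pa] tf_const]]]])
  then show ?thesis by (rule tf_cong) (simp add: hvN_def)
qed

lemma tf_outN: "tf n t \<Longrightarrow> tf n (\<lambda>xs. outN r (t xs))"
proof -
  assume t: "tf n t"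
  have "tf n (\<lambda>xs. clkU r (ps (t xs)) (pa (t xs)) - 1)" by (rule tf_pred[OF tf_clkU[OF tf_ps[OF t] tf_pa[OF t]]])
  then show ?thesis by (rule tf_cong) (simp add: outN_def)
qed

lemma tp_RN: "tf n k \<Longrightarrow> tf n m \<Longrightarrow> tf n x \<Longrightarrow> tf n t \<Longrightarrow> tf n (\<lambda>xs. if RN r (k xs) (m xs) (x xs) (t xs) then 1 else 0)"
proof -
  assume k: "tf n k" and m: "tf n m" and x: "tf n x" and t: "tf n t"
  have o: "tf n (\<lambda>xs. outN r (t xs))" by (rule tf_outN[OF t])
  have "tf n (\<lambda>xs. if hvN r (k xs) (t xs) \<and> m xs \<le> lenC (outN r (t xs)) \<and> enc (take (m xs) (dec (outN r (t xs)))) = x xs then 1 else 0)"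
    by (rule tp_and[OF tp_hvN[OF k t] tp_and[OF tp_le[OF m tf_lenC[OF o]] tp_eq[OF tf_takeC[OF m o] x]]])
  then show ?thesis by (rule tf_cong) (simp add: RN_def)
qed

lemma tf_cntN: "tf n k \<Longrightarrow> tf n m \<Longrightarrow> tf n x \<Longrightarrow> tf n T \<Longrightarrow> tf n (\<lambda>xs. cntN r (k xs) (m xs) (x xs) (T xs))"
proof -
  assume k: "tf n k" and m: "tf n m" and x: "tf n x" and T: "tf n T"
  have f: "tf (Suc n) (\<lambda>ys. if RN r (k (tl ys)) (m (tl ys)) (x (tl ys)) (hd ys) then 1 else 0)"
    by (rule tp_RN[OF tf_drop1[OF k] tf_drop1[OF m] tf_drop1[OF x] tf_hd])
  have "tf n (\<lambda>xs. \<Sum>t<T xs. (\<lambda>ys. if RN r (k (tl ys)) (m (tl ys)) (x (tl ys)) (hd ys) then 1 else 0) (t # xs))"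
    by (rule tf_sum[OF T f])
  then show ?thesis by (rule tf_cong) (simp add: cntN_def)
qed

lemma tp_BN: "tf n k \<Longrightarrow> tf n m \<Longrightarrow> tf n l \<Longrightarrow> tf n t \<Longrightarrow> tf n (\<lambda>xs. if BN r (k xs) (m xs) (l xs) (t xs) then 1 else 0)"
proof -
  assume k: "tf n k" and m: "tf n m" and l: "tf n l" and t: "tf n t"
  have o: "tf n (\<lambda>xs. outN r (t xs))" by (rule tf_outN[OF t])
  have "tf n (\<lambda>xs. if hvN r (k xs) (t xs) \<and> l xs \<le> lenC (outN r (t xs)) \<and>
      cntN r (k xs) (l xs) (enc (take (l xs) (dec (outN r (t xs))))) (Suc (t xs)) = 2 ^ m xs then 1 else 0)"
    by (rule tp_and[OF tp_hvN[OF k t] tp_and[OF tp_le[OF l tf_lenC[OF o]] tp_eq[OF tf_cntN[OF k l tf_takeC[OF l o] tf_Suc[OF t]] tf_pow[OF tf_const m]]]])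
  then show ?thesis by (rule tf_cong) (simp add: BN_def)
qed

lemma tf_cntB: "tf n k \<Longrightarrow> tf n m \<Longrightarrow> tf n l \<Longrightarrow> tf n T \<Longrightarrow> tf n (\<lambda>xs. cntB r (k xs) (m xs) (l xs) (T xs))"
proof -
  assume k: "tf n k" and m: "tf n m" and l: "tf n l" and T: "tf n T"
  have f: "tf (Suc n) (\<lambda>ys. if BN r (k (tl ys)) (m (tl ys)) (l (tl ys)) (hd ys) then 1 else 0)"
    by (rule tp_BN[OF tf_drop1[OF k] tf_drop1[OF m] tf_drop1[OF l] tf_hd])
  have "tf n (\<lambda>xs. \<Sum>t<T xs. (\<lambda>ys. if BN r (k (tl ys)) (m (tl ys)) (l (tl ys)) (hd ys) then 1 else 0) (t # xs))"
    by (rule tf_sum[OF T f])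
  then show ?thesis by (rule tf_cong) (simp add: cntB_def)
qed

lemma comp_M4: "computable2 (M4 r)"
proof (rule computable2_I)
  let ?k = "\<lambda>xs. fst (parse (dec (xs ! 0)))"
  let ?i = "\<lambda>xs. val (dec (enc (snd (parse (dec (xs ! 0))))))"
  let ?n = "\<lambda>xs. lenC (xs ! 1)"
  have k: "tf 2 ?k" by (rule tf_parse1[OF tp0])
  have i: "tf 2 ?i" by (rule tf_val[OF tf_parse2[OF tp0]])
  have n: "tf 2 ?n" by (rule tf_lenC[OF tp1])
  have S: "pf 2 (\<lambda>xs. if \<exists>T. ?i xs < cntN r (?k xs) (?n xs) (xs ! 1) (Suc T)
      then Some (LEAST T. ?i xs < cntN r (?k xs) (?n xs) (xs ! 1) (Suc T)) else None)"
  proof (rule pf_search'[where P = "\<lambda>T xs. ?i xs < cntN r (?k xs) (?n xs) (xs ! 1) (Suc T)"])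
    have x1: "tf (Suc 2) (\<lambda>ys. tl ys ! 1)" by (rule tf_drop1[OF tp1])
    show "tf (Suc 2) (\<lambda>ys. if ?i (tl ys) < cntN r (?k (tl ys)) (?n (tl ys)) (tl ys ! 1) (Suc (hd ys)) then 1 else 0)"
      by (rule tp_less[OF tf_drop1[OF i] tf_cntN[OF tf_drop1[OF k] tf_drop1[OF n] x1 tf_Suc[OF tf_hd]]])
  qed
  have f: "tf (Suc 2) (\<lambda>ys. enc (drop (?n (tl ys)) (dec (outN r (hd ys)))))"
    by (rule tf_dropC[OF tf_drop1[OF n] tf_outN[OF tf_hd]])
  have "pf 2 (\<lambda>xs. map_option (\<lambda>v. (\<lambda>ys. enc (drop (?n (tl ys)) (dec (outN r (hd ys))))) (v # xs))
     (if \<exists>T. ?i xs < cntN r (?k xs) (?n xs) (xs ! 1) (Suc T)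
      then Some (LEAST T. ?i xs < cntN r (?k xs) (?n xs) (xs ! 1) (Suc T)) else None))"
    by (rule pf_map[OF S f])
  then show "pf 2 (\<lambda>xs. map_option enc (M4 r (dec (xs ! 0)) (dec (xs ! 1))))"
    by (rule pf_cong) (simp add: M4_def Let_def lenC_def)
qed

lemma comp_M5: "computable1 (M5 r)"
proof (rule computable1_I)
  let ?k = "\<lambda>xs. fst (parse (dec (xs ! 0)))"
  let ?q1 = "\<lambda>xs. enc (snd (parse (dec (xs ! 0))))"
  let ?m = "\<lambda>xs. fst (parse (dec (?q1 xs)))"
  let ?q2 = "\<lambda>xs. enc (snd (parse (dec (?q1 xs))))"
  let ?l = "\<lambda>xs. fst (parse (dec (?q2 xs)))"
  let ?i = "\<lambda>xs. val (dec (enc (snd (parse (dec (?q2 xs))))))"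
  have k: "tf 1 ?k" by (rule tf_parse1[OF tq0])
  have q1: "tf 1 ?q1" by (rule tf_parse2[OF tq0])
  have m: "tf 1 ?m" by (rule tf_parse1[OF q1])
  have q2: "tf 1 ?q2" by (rule tf_parse2[OF q1])
  have l: "tf 1 ?l" by (rule tf_parse1[OF q2])
  have i: "tf 1 ?i" by (rule tf_val[OF tf_parse2[OF q2]])
  have S: "pf 1 (\<lambda>xs. if \<exists>T. ?i xs < cntB r (?k xs) (?m xs) (?l xs) (Suc T)
      then Some (LEAST T. ?i xs < cntB r (?k xs) (?m xs) (?l xs) (Suc T)) else None)"
  proof (rule pf_search'[where P = "\<lambda>T xs. ?i xs < cntB r (?k xs) (?m xs) (?l xs) (Suc T)"])
    show "tf (Suc 1) (\<lambda>ys. if ?i (tl ys) < cntB r (?k (tl ys)) (?m (tl ys)) (?l (tl ys)) (Suc (hd ys)) then 1 else 0)"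
      by (rule tp_less[OF tf_drop1[OF i] tf_cntB[OF tf_drop1[OF k] tf_drop1[OF m] tf_drop1[OF l] tf_Suc[OF tf_hd]]])
  qed
  have f: "tf (Suc 1) (\<lambda>ys. enc (take (?l (tl ys)) (dec (outN r (hd ys)))))"
    by (rule tf_takeC[OF tf_drop1[OF l] tf_outN[OF tf_hd]])
  have "pf 1 (\<lambda>xs. map_option (\<lambda>v. (\<lambda>ys. enc (take (?l (tl ys)) (dec (outN r (hd ys))))) (v # xs))
     (if \<exists>T. ?i xs < cntB r (?k xs) (?m xs) (?l xs) (Suc T)
      then Some (LEAST T. ?i xs < cntB r (?k xs) (?m xs) (?l xs) (Suc T)) else None))"
    by (rule pf_map[OF S f])
  then show "pf 1 (\<lambda>xs. map_option enc (M5 r (dec (xs ! 0))))"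
    by (rule pf_cong) (simp add: M5_def Let_def)
qed

lemma lenC_mono: "x \<le> y \<Longrightarrow> lenC x \<le> lenC y"
proof -
  assume xy: "x \<le> y"
  have lx: "lenC x = (LEAST L. x + 1 < 2 ^ Suc L)" using length_enc_least[of "dec x"] by (simp add: lenC_def)
  have ly: "lenC y = (LEAST L. y + 1 < 2 ^ Suc L)" using length_enc_least[of "dec y"] by (simp add: lenC_def)
  have "y + 1 < 2 ^ Suc (lenC y)" using enc_bounds[of "dec y"] by (simp add: lenC_def)
  then have "x + 1 < 2 ^ Suc (lenC y)" using xy by linarith
  then show ?thesis unfolding lx by (rule Least_le)
qed

lemma sum_ind_card: "(\<Sum>t<(T::nat). if P t then 1 else 0) = card {t. t < T \<and> P t}"
proof (induction T)
  case 0 then show ?case by simp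
next
  case (Suc T)
  have e: "{t. t < Suc T \<and> P t} = {t. t < T \<and> P t} \<union> (if P T then {T} else {})" by (auto simp: less_Suc_eq)
  have f: "finite {t. t < T \<and> P t}" by simp
  show ?case using Suc by (simp add: e card_insert_if f)
qed

lemma card_step: "card {t. t < Suc (T::nat) \<and> P t} = card {t. t < T \<and> P t} + (if P T then 1 else 0)"
  using sum_ind_card[of P "Suc T"] sum_ind_card[of P T] by simp

lemma card_less_mono: "(T1::nat) \<le> T2 \<Longrightarrow> card {t. t < T1 \<and> P t} \<le> card {t. t < T2 \<and> P t}"
  by (rule card_mono) auto

lemma selection:
  fixes t0 :: nat
  assumes fin: "finite {t. R t}" and r0: "R t0"
  shows "(\<exists>T. card {t. t < t0 \<and> R t} < card {t. t < Suc T \<and> R t})"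
    and "(LEAST T. card {t. t < t0 \<and> R t} < card {t. t < Suc T \<and> R t}) = t0"
    and "card {t. t < t0 \<and> R t} < card {t. R t}"
proof -
  have s: "card {t. t < Suc t0 \<and> R t} = card {t. t < t0 \<and> R t} + 1" using card_step[of t0 R] r0 by simp
  then show "\<exists>T. card {t. t < t0 \<and> R t} < card {t. t < Suc T \<and> R t}" by (intro exI[of _ t0]) simp
  show "(LEAST T. card {t. t < t0 \<and> R t} < card {t. t < Suc T \<and> R t}) = t0"
  proof (rule Least_equality)
    show "card {t. t < t0 \<and> R t} < card {t. t < Suc t0 \<and> R t}" using s by simp
    fix y assume "card {t. t < t0 \<and> R t} < card {t. t < Suc y \<and> R t}"
    then show "t0 \<le> y" using card_less_mono[of "Suc y" t0 R] by (meson not_less not_less_eq_eq)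
  qed
  have ps: "{t. t < t0 \<and> R t} \<subset> {t. R t}" using r0 by auto
  show "card {t. t < t0 \<and> R t} < card {t. R t}" by (rule psubset_card_mono[OF fin ps])
qed

lemma card_progs: "card {p :: bool list. length p \<le> k} < 2 ^ Suc k" and fin_progs: "finite {p :: bool list. length p \<le> k}"
proof -
  have sub: "enc ` {p. length p \<le> k} \<subseteq> {..< (2::nat) ^ Suc k - 1}"
  proof
    fix x assume "x \<in> enc ` {p. length p \<le> k}"
    then obtain p where p: "x = enc p" "length p \<le> k" by blast
    have "enc p + 1 < 2 ^ Suc (length p)" using enc_bounds by blast
    also have "(2::nat) ^ Suc (length p) \<le> 2 ^ Suc k" using p(2) by (intro power_increasing) simp_all
    finally show "x \<in> {..< (2::nat) ^ Suc k - 1}" using p(1) by simp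
  qed
  have inj: "inj_on enc {p. length p \<le> k}" using enc_inj by (meson inj_onI)
  have "card (enc ` {p. length p \<le> k}) \<le> card {..< (2::nat) ^ Suc k - 1}" by (rule card_mono[OF _ sub]) simp
  then have "card {p :: bool list. length p \<le> k} \<le> 2 ^ Suc k - 1" using card_image[OF inj] by simp
  moreover have "(0::nat) < 2 ^ Suc k" by simp
  ultimately show "card {p :: bool list. length p \<le> k} < 2 ^ Suc k" by linarith
  show "finite {p :: bool list. length p \<le> k}"
    using finite_subset[OF sub] inj by (simp add: finite_image_iff)
qed

lemma pow_bracket: "(1::nat) \<le> N \<Longrightarrow> \<exists>m. 2 ^ m \<le> N \<and> N < 2 ^ Suc m"
proof -
  assume "1 \<le> N"
  then have "enc (dec (N - 1)) + 1 = N" by simp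
  then show ?thesis using enc_bounds[of "dec (N - 1)"] by metis
qed

definition haltT :: "recf \<Rightarrow> nat \<Rightarrow> nat" where "haltT r a = (LEAST s. evb r s [a] \<noteq> None)"
definition evtN :: "recf \<Rightarrow> bool list \<Rightarrow> nat" where "evtN r p = pr (enc p) (haltT r (enc p))"

locale umach =
  fixes U :: "bool list \<Rightarrow> bool list option" and r :: recf
  assumes rU: "\<And>p w. eval r [enc p] (enc w) \<longleftrightarrow> U p = Some w"
begin

lemma U_evb: "U p = Some w \<longleftrightarrow> (\<exists>s. evb r s [enc p] = Some (enc w))"
  using rU eval_iff_evb by blast

lemma evb_val: "evb r s [enc p] = Some y \<Longrightarrow> U p = Some (dec y)"
  using U_evb by (metis enc_dec)

lemma hv_sound:
  assumes "hvN r k t"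
  shows "length (dec (pa t)) \<le> k \<and> U (dec (pa t)) = Some (dec (outN r t)) \<and> t = evtN r (dec (pa t))"
proof -
  let ?a = "pa t" and ?s = "ps t"
  have h: "lenC ?a \<le> k" "clkU r ?s ?a \<noteq> 0" "?s = 0 \<or> clkU r (?s - 1) ?a = 0" using assms by (auto simp: hvN_def)
  obtain y where y: "evb r ?s [?a] = Some y" using h(2) by (cases "evb r ?s [?a]") (auto simp: clkU_def)
  have o: "outN r t = y" using y by (simp add: outN_def clkU_def)
  have U: "U (dec ?a) = Some (dec y)" using evb_val[of ?s "dec ?a" y] y by simp
  have "haltT r ?a = ?s"
    unfolding haltT_def
  proof (rule Least_equality)
    show "evb r ?s [?a] \<noteq> None" using y by simp
    fix s' assume s': "evb r s' [?a] \<noteq> None"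
    show "?s \<le> s'"
    proof (rule ccontr)
      assume "\<not> ?s \<le> s'"
      then have lt: "s' \<le> ?s - 1" "?s \<noteq> 0" by auto
      then have none: "evb r (?s - 1) [?a] = None" using h(3) by (simp add: clkU_def enco_0_iff)
      obtain y' where "evb r s' [?a] = Some y'" using s' by blast
      then have "evb r (?s - 1) [?a] = Some y'" using evb_mono lt(1) by blast
      then show False using none by simp
    qed
  qed
  then have "t = evtN r (dec ?a)" unfolding evtN_def by simp
  then show ?thesis using h(1) U o by (simp add: lenC_def)
qed

lemma hv_complete:
  assumes "length p \<le> k" "U p = Some w"
  shows "hvN r k (evtN r p) \<and> outN r (evtN r p) = enc w \<and> pa (evtN r p) = enc p"
proof -
  obtain s0 where s0: "evb r s0 [enc p] = Some (enc w)" using assms(2) U_evb by blast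
  let ?h = "haltT r (enc p)"
  have hn: "evb r ?h [enc p] \<noteq> None" unfolding haltT_def by (rule LeastI[of _ s0]) (simp add: s0)
  then obtain y where y: "evb r ?h [enc p] = Some y" by blast
  have "y = enc w"
  proof -
    have "evb r (max s0 ?h) [enc p] = Some y" using evb_mono[OF y] by simp
    moreover have "evb r (max s0 ?h) [enc p] = Some (enc w)" using evb_mono[OF s0] by simp
    ultimately show ?thesis by simp
  qed
  have before: "?h \<noteq> 0 \<Longrightarrow> evb r (?h - 1) [enc p] = None"
    unfolding haltT_def using not_less_Least[of "?h - 1" "\<lambda>s. evb r s [enc p] \<noteq> None"] by (simp add: haltT_def)
  show ?thesis unfolding evtN_def hvN_def outN_def clkU_def using assms(1) y before \<open>y = enc w\<close>
    by (cases "haltT r (enc p) = 0") (auto simp: lenC_def)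
qed

definition Hs :: "nat \<Rightarrow> nat set" where "Hs k = {t. hvN r k t}"

lemma Hs_img: "Hs k = evtN r ` {p. length p \<le> k \<and> U p \<noteq> None}"
proof
  show "Hs k \<subseteq> evtN r ` {p. length p \<le> k \<and> U p \<noteq> None}"
  proof
    fix t assume "t \<in> Hs k"
    then have "hvN r k t" by (simp add: Hs_def)
    from hv_sound[OF this] show "t \<in> evtN r ` {p. length p \<le> k \<and> U p \<noteq> None}" by auto
  qed
  show "evtN r ` {p. length p \<le> k \<and> U p \<noteq> None} \<subseteq> Hs k"
    using hv_complete by (auto simp: Hs_def)
qed

lemma evtN_inj: "inj evtN'" if "evtN' = evtN r" for evtN'
  unfolding that by (rule injI) (metis dec_enc evtN_def pa_pr)

lemma Hs_fin: "finite (Hs k)"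
  unfolding Hs_img by (rule finite_imageI) (rule finite_subset[OF _ fin_progs[of k]], auto)

lemma Hs_card: "card (Hs k) < 2 ^ Suc k"
proof -
  have "card (Hs k) \<le> card {p. length p \<le> k \<and> U p \<noteq> None}" unfolding Hs_img by (rule card_image_le) (rule finite_subset[OF _ fin_progs[of k]], auto)
  also have "\<dots> \<le> card {p :: bool list. length p \<le> k}" by (rule card_mono[OF fin_progs]) auto
  finally show ?thesis using card_progs[of k] by linarith
qed

end

context umach
begin

lemma cntN_card: "cntN r k n x T = card {t. t < T \<and> RN r k n x t}"
  unfolding cntN_def by (rule sum_ind_card)

lemma cntB_card: "cntB r k m n T = card {t. t < T \<and> BN r k m n t}"
  unfolding cntB_def by (rule sum_ind_card)

lemma RN_fin: "finite {t. RN r k n x t}"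
  by (rule finite_subset[OF _ Hs_fin[of k]]) (auto simp: Hs_def RN_def)

lemma RN_Hs: "{t. RN r k n x t} \<subseteq> Hs k"
  by (auto simp: Hs_def RN_def)

lemma M4_works:
  assumes pp: "U pp = Some (v @ u)" "length pp \<le> k"
  shows "\<exists>m idx. 2 ^ m \<le> card {t. RN r k (length v) (enc v) t} \<and> idx < 2 ^ Suc m
     \<and> M4 r (code k @ bin (Suc m) idx) v = Some u"
proof -
  let ?n = "length v"
  let ?R = "\<lambda>t. RN r k ?n (enc v) t"
  let ?t = "evtN r pp"
  have hc: "hvN r k ?t \<and> outN r ?t = enc (v @ u) \<and> pa ?t = enc pp" by (rule hv_complete[OF pp(2) pp(1)])
  have Rt: "?R ?t" using hc by (simp add: RN_def lenC_def)
  have fin: "finite {t. ?R t}" by (rule RN_fin)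
  have sel: "(\<exists>T. card {t. t < ?t \<and> ?R t} < card {t. t < Suc T \<and> ?R t})"
    "(LEAST T. card {t. t < ?t \<and> ?R t} < card {t. t < Suc T \<and> ?R t}) = ?t"
    "card {t. t < ?t \<and> ?R t} < card {t. ?R t}"
    using selection[OF fin, of ?t] Rt by blast+
  have "1 \<le> card {t. ?R t}" using sel(3) by linarith
  then obtain m where m: "2 ^ m \<le> card {t. ?R t}" "card {t. ?R t} < 2 ^ Suc m" using pow_bracket by blast
  let ?idx = "card {t. t < ?t \<and> ?R t}"
  have idx: "?idx < 2 ^ Suc m" using sel(3) m(2) by linarith
  have b: "val (bin (Suc m) ?idx) = ?idx" using bin_props[OF idx] by blast
  have "M4 r (code k @ bin (Suc m) ?idx) v = Some (drop ?n (dec (outN r ?t)))"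
    unfolding M4_def Let_def parse_code fst_conv snd_conv b cntN_card using sel(1,2) by simp
  also have "\<dots> = Some u" using hc by simp
  finally show ?thesis using m(1) idx by blast
qed

lemma M5_works:
  assumes m: "2 ^ m \<le> card {t. RN r k n (enc v) t}" and n: "length v = n"
  shows "m \<le> k \<and> (\<exists>idx. idx < 2 ^ (Suc k - m) \<and> M5 r (code k @ code m @ code n @ bin (Suc k - m) idx) = Some v)"
proof -
  let ?R = "\<lambda>t. RN r k n (enc v) t"
  let ?c = "\<lambda>T. card {t. t < T \<and> ?R t}"
  have fin: "finite {t. ?R t}" by (rule RN_fin)
  have "2 ^ m < (2::nat) ^ Suc k"
    using m card_mono[OF Hs_fin RN_Hs[of k n "enc v"]] Hs_card[of k] by linarith
  then have mk: "m < Suc k" using power_strict_increasing_iff[of "2::nat" m "Suc k"] by simp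
  \<comment> \<open>the event at which the count of v reaches 2^m\<close>
  obtain T0 where T0: "\<forall>t. ?R t \<longrightarrow> t < T0" using fin by (auto simp: finite_nat_set_iff_bounded)
  have cT0: "?c T0 = card {t. ?R t}" using T0 by (intro arg_cong[where f=card]) auto
  have ex: "2 ^ m \<le> ?c (Suc T0)" using cT0 m card_less_mono[of T0 "Suc T0" ?R] by linarith
  define tv where "tv = (LEAST t. 2 ^ m \<le> ?c (Suc t))"
  have c1: "2 ^ m \<le> ?c (Suc tv)" unfolding tv_def by (rule LeastI[of "\<lambda>t. 2 ^ m \<le> ?c (Suc t)", OF ex])
  have c0: "?c tv < 2 ^ m"
  proof (cases tv)
    case 0 then show ?thesis by simp
  next
    case (Suc t')
    have "t' < tv" using Suc by simp
    then have "\<not> 2 ^ m \<le> ?c (Suc t')" unfolding tv_def by (rule not_less_Least)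
    then show ?thesis using Suc by simp
  qed
  have step: "?c (Suc tv) = ?c tv + (if ?R tv then 1 else 0)" by (rule card_step)
  have Rtv: "?R tv" using step c0 c1 by (cases "?R tv") auto
  have ctv: "?c (Suc tv) = 2 ^ m" using step c0 c1 Rtv by simp
  have outv: "take n (dec (outN r tv)) = v" using Rtv unfolding RN_def using enc_inj by blast
  let ?B = "\<lambda>t. BN r k m n t"
  have BN_eq: "\<And>t. ?B t \<longleftrightarrow> RN r k n (enc (take n (dec (outN r t)))) t \<and> cntN r k n (enc (take n (dec (outN r t)))) (Suc t) = 2 ^ m"
    by (auto simp: BN_def RN_def)
  have Btv: "?B tv" using BN_eq Rtv ctv outv cntN_card by simp
  have Bfin: "finite {t. ?B t}" by (rule finite_subset[OF _ Hs_fin[of k]]) (auto simp: Hs_def BN_def)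
  let ?V = "\<lambda>t. enc (take n (dec (outN r t)))"
  let ?S = "\<lambda>t. {t'. RN r k n (?V t) t'}"
  have inj: "inj_on ?V {t. ?B t}"
  proof (rule inj_onI)
    fix t1 t2 assume b1: "t1 \<in> {t. ?B t}" and b2: "t2 \<in> {t. ?B t}" and eq: "?V t1 = ?V t2"
    show "t1 = t2"
    proof (rule ccontr)
      assume ne: "t1 \<noteq> t2"
      have main: "\<And>a b. ?B a \<Longrightarrow> ?B b \<Longrightarrow> ?V a = ?V b \<Longrightarrow> a < b \<Longrightarrow> False"
      proof -
        fix a b assume ba: "?B a" and bb: "?B b" and e: "?V a = ?V b" and ab: "a < b"
        have ca: "card {t. t < Suc a \<and> RN r k n (?V a) t} = 2 ^ m" using ba BN_eq cntN_card by simp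
        have cb: "card {t. t < Suc b \<and> RN r k n (?V a) t} = 2 ^ m" using bb BN_eq cntN_card e by simp
        have rb: "RN r k n (?V a) b" using bb BN_eq e by simp
        have sub: "insert b {t. t < Suc a \<and> RN r k n (?V a) t} \<subseteq> {t. t < Suc b \<and> RN r k n (?V a) t}"
          using rb ab by auto
        have "card (insert b {t. t < Suc a \<and> RN r k n (?V a) t}) = Suc (2 ^ m)"
          using ab ca by (subst card_insert_disjoint) auto
        moreover have "card (insert b {t. t < Suc a \<and> RN r k n (?V a) t}) \<le> 2 ^ m"
          using card_mono[OF _ sub] cb by simp
        ultimately show False by simp
      qed
      show False
      proof (cases "t1 < t2")
        case True then show False using main[of t1 t2] b1 b2 eq by simp
      next
        case False then have "t2 < t1" using ne by simp
        then show False using main[of t2 t1] b1 b2 eq by simp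
      qed
    qed
  qed
  have Sbig: "\<And>t. ?B t \<Longrightarrow> 2 ^ m \<le> card (?S t)"
  proof -
    fix t assume "?B t"
    then have "card {t'. t' < Suc t \<and> RN r k n (?V t) t'} = 2 ^ m" using BN_eq cntN_card by simp
    moreover have "card {t'. t' < Suc t \<and> RN r k n (?V t) t'} \<le> card (?S t)"
      by (rule card_mono[OF RN_fin]) auto
    ultimately show "2 ^ m \<le> card (?S t)" by simp
  qed
  have disj: "\<forall>t1\<in>{t. ?B t}. \<forall>t2\<in>{t. ?B t}. t1 \<noteq> t2 \<longrightarrow> ?S t1 \<inter> ?S t2 = {}"
  proof (intro ballI impI)
    fix t1 t2 assume "t1 \<in> {t. ?B t}" "t2 \<in> {t. ?B t}" "t1 \<noteq> t2"
    then have "?V t1 \<noteq> ?V t2" using inj by (meson inj_on_contraD)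
    then show "?S t1 \<inter> ?S t2 = {}" by (auto simp: RN_def)
  qed
  have "card {t. ?B t} * 2 ^ m \<le> (\<Sum>t\<in>{t. ?B t}. card (?S t))"
    using Sbig sum_mono[of "{t. ?B t}" "\<lambda>_. 2 ^ m" "\<lambda>t. card (?S t)"] by simp
  also have "\<dots> = card (\<Union>t\<in>{t. ?B t}. ?S t)"
    by (rule card_UN_disjoint[symmetric, OF Bfin _ disj]) (auto intro: RN_fin)
  also have "\<dots> \<le> card (Hs k)" by (rule card_mono[OF Hs_fin]) (use RN_Hs in blast)
  finally have "card {t. ?B t} * 2 ^ m < 2 ^ Suc k" using Hs_card[of k] by linarith
  also have "(2::nat) ^ Suc k = 2 ^ (Suc k - m) * 2 ^ m" using mk by (simp add: power_add[symmetric])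
  finally have cB: "card {t. ?B t} < 2 ^ (Suc k - m)" by simp
  have sel: "(\<exists>T. card {t. t < tv \<and> ?B t} < card {t. t < Suc T \<and> ?B t})"
    "(LEAST T. card {t. t < tv \<and> ?B t} < card {t. t < Suc T \<and> ?B t}) = tv"
    "card {t. t < tv \<and> ?B t} < card {t. ?B t}"
    using selection[OF Bfin, of tv] Btv by blast+
  let ?idx = "card {t. t < tv \<and> ?B t}"
  have idx: "?idx < 2 ^ (Suc k - m)" using sel(3) cB by linarith
  have b: "val (bin (Suc k - m) ?idx) = ?idx" using bin_props[OF idx] by blast
  have "M5 r (code k @ code m @ code n @ bin (Suc k - m) ?idx) = Some (take n (dec (outN r tv)))"
    unfolding M5_def Let_def parse_code fst_conv snd_conv b cntB_card using sel(1,2) by simp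
  then show ?thesis using outv idx mk by auto
qed

end

lemma SoI_hard:
  assumes U: "universal1 U" and W: "universal2 W"
  shows "\<exists>c. \<forall>v u. KC W u v + KP U v \<le> KP U (v @ u) + 6 * lenC (KP U (v @ u)) + 2 * lenC (length v) + c"
proof -
  obtain r where r: "\<forall>p w. eval r [enc p] (enc w) \<longleftrightarrow> U p = Some w"
    using univ1_comp[OF U] unfolding computable1_def by blast
  interpret umach U r by unfold_locales (use r in blast)
  obtain c4 where c4: "\<forall>p v u. M4 r p v = Some u \<longrightarrow> KC W u v \<le> length p + c4"
    using univ2_bound[OF W comp_M4] by blast
  obtain c5 where c5: "\<forall>p u. M5 r p = Some u \<longrightarrow> KP U u \<le> length p + c5"
    using univ1_bound[OF U comp_M5] by blast
  show ?thesis
  proof (intro exI[of _ "c4 + c5 + 6"] allI)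
    fix v u
    let ?k = "KP U (v @ u)"
    obtain pp where pp: "U pp = Some (v @ u)" "length pp = ?k" using KP_ex[OF U] by blast
    have ex: "\<exists>m idx. 2 ^ m \<le> card {t. RN r ?k (length v) (enc v) t} \<and> idx < 2 ^ Suc m
     \<and> M4 r (code ?k @ bin (Suc m) idx) v = Some u" by (rule M4_works[OF pp(1)]) (simp add: pp(2))
    then obtain m idx where m: "2 ^ m \<le> card {t. RN r ?k (length v) (enc v) t}" "idx < 2 ^ Suc m"
      "M4 r (code ?k @ bin (Suc m) idx) v = Some u" by blast
    have k1: "KC W u v \<le> 2 * lenC ?k + 1 + Suc m + c4"
      using c4 m(3) bin_props[OF m(2)] by (fastforce simp: length_code)
    obtain idx2 where mk: "m \<le> ?k" and i2: "idx2 < 2 ^ (Suc ?k - m)"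
      "M5 r (code ?k @ code m @ code (length v) @ bin (Suc ?k - m) idx2) = Some v"
      using M5_works[OF m(1) refl] by blast
    have k2: "KP U v \<le> (2 * lenC ?k + 1) + (2 * lenC m + 1) + (2 * lenC (length v) + 1) + (Suc ?k - m) + c5"
      using c5 i2(2) bin_props[OF i2(1)] by (fastforce simp: length_code)
    have "lenC m \<le> lenC ?k" by (rule lenC_mono[OF mk])
    then show "KC W u v + KP U v \<le> ?k + 6 * lenC ?k + 2 * lenC (length v) + (c4 + c5 + 6)"
      using k1 k2 mk by linarith
  qed
qed

lemma lenC_bound: "N \<le> A * B ^ k \<Longrightarrow> lenC N \<le> lenC A + k * (lenC B + 1)"
proof -
  assume N: "N \<le> A * B ^ k"
  have a: "A + 1 < 2 ^ Suc (lenC A)" using enc_bounds[of "dec A"] by (simp add: lenC_def)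
  have b: "B + 1 < 2 ^ Suc (lenC B)" using enc_bounds[of "dec B"] by (simp add: lenC_def)
  have n: "2 ^ lenC N \<le> N + 1" using enc_bounds[of "dec N"] by (simp add: lenC_def)
  have "N + 1 \<le> A * (B + 1) ^ k + (B + 1) ^ k"
  proof -
    have "A * B ^ k \<le> A * (B + 1) ^ k" by (intro mult_le_mono2 power_mono) simp_all
    moreover have "1 \<le> (B + 1) ^ k" by simp
    ultimately show ?thesis using N by linarith
  qed
  also have "\<dots> = (A + 1) * (B + 1) ^ k" by (simp add: algebra_simps)
  also have "\<dots> < 2 ^ Suc (lenC A) * (2 ^ Suc (lenC B)) ^ k"
  proof -
    have "(B + 1) ^ k \<le> (2 ^ Suc (lenC B)) ^ k" using b by (intro power_mono) simp_all
    moreover have "0 < (B + 1) ^ k" by simp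
    ultimately show ?thesis using a by (meson mult_less_le_imp_less zero_le)
  qed
  also have "\<dots> = 2 ^ (Suc (lenC A) + Suc (lenC B) * k)" by (simp only: power_add power_mult)
  finally have "(2::nat) ^ lenC N < 2 ^ (Suc (lenC A) + Suc (lenC B) * k)" using n by linarith
  then have "lenC N < Suc (lenC A) + Suc (lenC B) * k"
    using power_strict_increasing_iff[of "2::nat" "lenC N" "Suc (lenC A) + Suc (lenC B) * k"] by simp
  moreover have "Suc (lenC B) * k = k * (lenC B + 1)" by simp
  ultimately show ?thesis by linarith
qed

definition Ssum :: "nat \<Rightarrow> nat \<Rightarrow> nat \<Rightarrow> nat" where "Ssum a b i = (\<Sum>l\<in>{1..i}. tb a b l)"

lemma Ssum_Suc: "Ssum a b (Suc i) = Ssum a b i + tb a b (Suc i)"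
  unfolding Ssum_def by (simp add: sum.atLeast1_atMost_eq add.commute)

lemma tb_SS: "tb a b (Suc (Suc k)) = b * Ssum a b (Suc k)"
  unfolding Ssum_def by (rule tb.simps(3))

declare tb.simps(3)[simp del]

lemma Ssum_formula: "Ssum a b (Suc k) = a * (b + 1) ^ k"
proof (induction k)
  case 0 then show ?case by (simp add: Ssum_def)
next
  case (Suc k)
  have "Ssum a b (Suc (Suc k)) = Ssum a b (Suc k) + b * Ssum a b (Suc k)" by (simp only: Ssum_Suc tb_SS)
  then show ?case using Suc by (simp add: algebra_simps)
qed

lemma tb_le_Ssum: "1 \<le> i \<Longrightarrow> tb a b i \<le> Ssum a b i"
  unfolding Ssum_def by (rule member_le_sum) auto

lemma tb_bound: "tb a b i \<le> a * (b + 1) ^ i"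
proof (cases i)
  case 0 then show ?thesis by simp
next
  case (Suc k)
  have "tb a b i \<le> a * (b + 1) ^ k" using tb_le_Ssum[of i a b] Ssum_formula[of a b k] Suc by simp
  also have "\<dots> \<le> a * (b + 1) ^ i" using Suc by (intro mult_le_mono2 power_increasing) simp_all
  finally show ?thesis .
qed

lemma tb_bound2: "tb a b i \<le> a * (b + 1) ^ (i + j)"
  using tb_bound[of a b i] by (meson le_add1 le_trans mult_le_mono2 power_increasing le_add2 zero_less_Suc le_SucI Suc_eq_plus1 one_le_numeral)

lemma tb_pos: "0 < a \<Longrightarrow> 1 \<le> b \<Longrightarrow> 1 \<le> i \<Longrightarrow> 1 \<le> tb a b i"
proof -
  assume a: "0 < a" and b: "1 \<le> b" and i: "1 \<le> i"
  show ?thesis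
  proof (cases i)
    case 0 then show ?thesis using i by simp
  next
    case (Suc k)
    show ?thesis
    proof (cases k)
      case 0 then show ?thesis using Suc a by simp
    next
      case (Suc k')
      have "tb a b i = b * (a * (b + 1) ^ k')" using \<open>i = Suc k\<close> Suc tb_SS Ssum_formula by simp
      moreover have "1 \<le> a * (b + 1) ^ k'" using a by simp
      ultimately show ?thesis using b by (metis mult_le_mono nat_mult_1)
    qed
  qed
qed

lemma tb_mono: "1 \<le> b \<Longrightarrow> 1 \<le> i \<Longrightarrow> tb a b (i - 1) \<le> tb a b i"
proof -
  assume b: "1 \<le> b" and i: "1 \<le> i"
  show ?thesis
  proof (cases i)
    case 0 then show ?thesis using i by simp
  next
    case (Suc k)
    show ?thesis
    proof (cases k)
      case 0 then show ?thesis using Suc by simp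
    next
      case (Suc k')
      have "tb a b (i - 1) \<le> Ssum a b (Suc k')" using tb_le_Ssum[of "Suc k'" a b] \<open>i = Suc k\<close> Suc by simp
      also have "\<dots> \<le> b * Ssum a b (Suc k')" using b by simp
      also have "\<dots> = tb a b i" using \<open>i = Suc k\<close> Suc tb_SS by simp
      finally show ?thesis .
    qed
  qed
qed

lemma length_seg1: "length (seg x 1 n) = n" by (simp add: seg_def)

lemma length_seg: "length (seg x (m + 1) n) = n - m" by (simp add: seg_def del: upt_Suc)

lemma seg_append: "m \<le> n \<Longrightarrow> seg x 1 m @ seg x (m + 1) n = seg x 1 n"
proof -
  assume "m \<le> n"
  then have "[1..<Suc m] @ [Suc m..<Suc m + (n - m)] = [1..<Suc m + (n - m)]" by (intro upt_add_eq_append[symmetric]) simp_all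
  then have "[1..<Suc m] @ [Suc m..<Suc n] = [1..<Suc n]" using \<open>m \<le> n\<close> by simp
  then show ?thesis unfolding seg_def by (metis Suc_eq_plus1 map_append)
qed

lemma rate_le1:
  assumes U: "universal1 U" and r: "rand_rate U \<tau> x"
  shows "\<tau> \<le> 1"
proof (rule ccontr)
  assume "\<not> \<tau> \<le> 1"
  then have t: "\<tau> > 1" by simp
  obtain cU where cU: "\<forall>u. KP U u \<le> length u + cU" using KP_upper[OF U] by blast
  obtain N where N: "\<forall>n\<ge>N. \<tau> * real n \<le> real (KP U (seg x 1 n))" using r unfolding rand_rate_def eventually_sequentially by blast
  define n where "n = max N (nat \<lceil>real cU / (\<tau> - 1)\<rceil> + 1)"
  have "\<tau> * real n \<le> real (KP U (seg x 1 n))" using N n_def by simp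
  also have "\<dots> \<le> real n + real cU"
  proof -
    have "KP U (seg x 1 n) \<le> n + cU" using cU length_seg1 by metis
    then show ?thesis by (simp only: of_nat_add[symmetric] of_nat_le_iff)
  qed
  finally have h: "(\<tau> - 1) * real n \<le> real cU" by (simp add: algebra_simps)
  have "real cU / (\<tau> - 1) < real n" unfolding n_def by linarith
  then have "real cU < (\<tau> - 1) * real n" using t by (simp add: divide_less_eq mult.commute)
  then show False using h by simp
qed

lemma length_seg1': "length (seg x (Suc 0) n) = n" by (simp add: seg_def)

lemma log_tb:
  assumes a: "0 < a" and b: "1 \<le> b" and i: "1 \<le> i"
  shows "log 2 (real (tb a b i)) \<le> log 2 (real a) + real (i + j) * log 2 (real b + 1)"
proof -
  have pos: "0 < real (tb a b i)" using tb_pos[OF a b i] by simp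
  have "real (tb a b i) \<le> real (a * (b + 1) ^ (i + j))" using tb_bound2[of a b i j] by (rule of_nat_mono)
  then have "log 2 (real (tb a b i)) \<le> log 2 (real (a * (b + 1) ^ (i + j)))" using pos by simp
  also have "\<dots> = log 2 (real a) + real (i + j) * log 2 (real b + 1)"
    using a by (simp add: log_mult log_nat_power add.commute)
  finally show ?thesis .
qed

theorem lemma4p6:
  fixes U :: "bool list \<Rightarrow> bool list option"
    and W :: "bool list \<Rightarrow> bool list \<Rightarrow> bool list option"
    and x y :: "nat \<Rightarrow> bool"
    and \<tau> \<sigma> \<sigma>' :: real and a b :: nat
  assumes "universal1 U" and "universal2 W"
    and "indep U x y"
    and "\<tau> > 0" and "rand_rate U \<tau> x" and "rand_rate U \<tau> y"
    and "0 < \<sigma>" and "\<sigma> < \<tau>" and "0 < \<sigma>'" and "\<sigma>' < \<tau> - \<sigma>"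
    and "b = nat \<lceil>(1 - \<sigma>) / \<sigma>'\<rceil>"
    and "a > 0"
  shows "\<exists>c::real. \<forall>i\<ge>1. \<forall>j\<ge>1.
     \<bar>real (KC W (seg x (tb a b (i - 1) + 1) (tb a b i))
                   (seg x 1 (tb a b (i - 1)) @ seg y 1 (tb a b j)))
      - real (KC W (seg x (tb a b (i - 1) + 1) (tb a b i)) (seg x 1 (tb a b (i - 1))))\<bar>
        \<le> c * real (i + j)
   \<and> \<bar>real (KC W (seg y (tb a b (i - 1) + 1) (tb a b i))
                   (seg x 1 (tb a b j) @ seg y 1 (tb a b (i - 1))))
      - real (KC W (seg y (tb a b (i - 1) + 1) (tb a b i)) (seg y 1 (tb a b (i - 1))))\<bar>
        \<le> c * real (i + j)"
proof -
  note U = assms(1) and W = assms(2)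
  obtain cR where cR: "\<forall>u v w. KC W u (v @ w) \<le> KC W u v + 2 * lenC (length w) + cR" using KC_extend_right[OF W] by blast
  obtain cL where cL: "\<forall>u v w. KC W u (w @ v) \<le> KC W u v + 2 * lenC (length w) + cL" using KC_extend_left[OF W] by blast
  obtain c2 where c2: "\<forall>v w. KP U (v @ w) \<le> KP U v + KP U w + 2 * lenC (KP U v) + c2" using KP_concat[OF U] by blast
  obtain c3 where c3: "\<forall>a u b. KP U (a @ u @ b) \<le> KP U (a @ b) + KC W u (a @ b) + 2 * lenC (KP U (a @ b)) + 2 * lenC (length a) + c3"
    using KP_insert[OF U W] by blast
  obtain cH where cH: "\<forall>v u. KC W u v + KP U v \<le> KP U (v @ u) + 6 * lenC (KP U (v @ u)) + 2 * lenC (length v) + cH"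
    using SoI_hard[OF U W] by blast
  obtain cU where cU: "\<forall>u. KP U u \<le> length u + cU" using KP_upper[OF U] by blast
  obtain c0' where c0': "\<forall>n\<ge>1. \<forall>m\<ge>1. real (KP U (seg x 1 n @ seg y 1 m)) \<ge>
       real (KP U (seg x 1 n)) + real (KP U (seg y 1 m)) - c0' * (1 + log 2 (real n) + log 2 (real m))"
    using assms(3) unfolding indep_def by blast
  define c0 where "c0 = max c0' 0"
  have c0pos: "0 \<le> c0" by (simp add: c0_def)
  have ind: "\<And>n m. 1 \<le> n \<Longrightarrow> 1 \<le> m \<Longrightarrow> real (KP U (seg x 1 n)) + real (KP U (seg y 1 m)) - c0 * (1 + log 2 (real n) + log 2 (real m))
       \<le> real (KP U (seg x 1 n @ seg y 1 m))"
  proof -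
    fix n m :: nat assume n: "1 \<le> n" and m: "1 \<le> m"
    have "0 \<le> 1 + log 2 (real n) + log 2 (real m)" using n m by simp
    then have "c0' * (1 + log 2 (real n) + log 2 (real m)) \<le> c0 * (1 + log 2 (real n) + log 2 (real m))"
      unfolding c0_def by (intro mult_right_mono) simp_all
    then show "real (KP U (seg x 1 n)) + real (KP U (seg y 1 m)) - c0 * (1 + log 2 (real n) + log 2 (real m))
       \<le> real (KP U (seg x 1 n @ seg y 1 m))" using c0' n m by fastforce
  qed
  have "\<tau> \<le> 1" by (rule rate_le1[OF U assms(5)])
  then have "\<sigma> < 1" using assms(8) by simp
  then have "0 < (1 - \<sigma>) / \<sigma>'" using assms(9) by simp
  then have "1 \<le> \<lceil>(1 - \<sigma>) / \<sigma>'\<rceil>" by simp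
  then have b1: "1 \<le> b" using assms(11) by linarith
  have a0: "0 < a" by (rule assms(12))
  define K0 where "K0 = lenC (2 * a + cU)"
  define K1 where "K1 = lenC (b + 1) + 1"
  define LA where "LA = \<bar>log 2 (real a)\<bar>"
  define LB where "LB = log 2 (real b + 1)"
  have LB0: "0 \<le> LB" unfolding LB_def by simp
  define C0 where "C0 = real (14 * K0) + real cR + real cL + real cH + real c3 + real c2 + c0 * (1 + 2 * LA)"
  define C1 where "C1 = real (14 * K1) + 2 * c0 * LB"
  have C0pos: "0 \<le> C0" unfolding C0_def LA_def using c0pos by simp
  show ?thesis
  proof (intro exI[of _ "C0 + C1"] allI impI conjI)
    fix i j :: nat assume i: "1 \<le> i" and j: "1 \<le> j"
    let ?t = "tb a b"
    define s where "s = i + j"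
    have s1: "1 \<le> real s" using i s_def by simp
    define Lam where "Lam = lenC ((2 * a + cU) * (b + 1) ^ s)"
    have LamB: "real Lam \<le> real K0 + real s * real K1"
    proof -
      have "Lam \<le> K0 + s * K1" unfolding Lam_def K0_def K1_def by (rule lenC_bound) simp
      then show ?thesis by (metis of_nat_add of_nat_mono of_nat_mult)
    qed
    have ti: "?t i \<le> a * (b + 1) ^ s" unfolding s_def by (rule tb_bound2)
    have tj: "?t j \<le> a * (b + 1) ^ s" unfolding s_def using tb_bound2[of a b j i] by (simp add: add.commute)
    have tim: "?t (i - 1) \<le> ?t i" by (rule tb_mono[OF b1 i])
    have key: "\<And>N. N \<le> ?t i + ?t j + cU \<Longrightarrow> lenC N \<le> Lam"
    proof -
      fix N assume N: "N \<le> ?t i + ?t j + cU"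
      have cUle: "cU \<le> cU * (b + 1) ^ s" by simp
      have e: "(2 * a + cU) * (b + 1) ^ s = a * (b + 1) ^ s + a * (b + 1) ^ s + cU * (b + 1) ^ s" by (simp add: algebra_simps)
      have "N \<le> a * (b + 1) ^ s + a * (b + 1) ^ s + cU * (b + 1) ^ s" using N ti tj cUle by linarith
      then have "N \<le> (2 * a + cU) * (b + 1) ^ s" using e by simp
      then show "lenC N \<le> Lam" unfolding Lam_def by (rule lenC_mono)
    qed
    have h1: "log 2 (real (?t i)) \<le> log 2 (real a) + real s * LB"
      using log_tb[OF a0 b1 i, of j] unfolding s_def LB_def .
    have h2: "log 2 (real (?t j)) \<le> log 2 (real a) + real s * LB"
      using log_tb[OF a0 b1 j, of i] unfolding s_def LB_def by (metis add.commute)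
    have la: "log 2 (real a) \<le> LA" unfolding LA_def by simp
    have logs: "log 2 (real (?t i)) + log 2 (real (?t j)) \<le> 2 * LA + 2 * (real s * LB)"
      using h1 h2 la by linarith
    have ti1: "1 \<le> ?t i" by (rule tb_pos[OF a0 b1 i])
    have tj1: "1 \<le> ?t j" by (rule tb_pos[OF a0 b1 j])
    have Ibound: "c0 * (1 + log 2 (real (?t i)) + log 2 (real (?t j))) \<le> c0 * (1 + 2 * LA) + 2 * c0 * LB * real s"
    proof -
      have "c0 * (1 + log 2 (real (?t i)) + log 2 (real (?t j))) \<le> c0 * (1 + 2 * LA + 2 * (real s * LB))"
        using logs c0pos by (intro mult_left_mono) simp_all
      then show ?thesis by (simp add: algebra_simps)
    qed
    have final: "\<And>D. D \<le> 14 * real Lam + real cR + real cL + real cH + real c3 + real c2 + c0 * (1 + log 2 (real (?t i)) + log 2 (real (?t j)))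
        \<Longrightarrow> D \<le> (C0 + C1) * real (i + j)"
    proof -
      fix D assume D: "D \<le> 14 * real Lam + real cR + real cL + real cH + real c3 + real c2 + c0 * (1 + log 2 (real (?t i)) + log 2 (real (?t j)))"
      have "14 * real Lam \<le> real (14 * K0) + real s * real (14 * K1)" using LamB by simp
      then have "D \<le> C0 + C1 * real s" using D Ibound unfolding C0_def C1_def by (simp add: algebra_simps)
      also have "C0 \<le> C0 * real s" using C0pos s1 by (simp add: mult_le_cancel_left1)
      finally show "D \<le> (C0 + C1) * real (i + j)" unfolding s_def by (simp add: algebra_simps)
    qed
    let ?P = "seg x 1 (?t (i - 1))" and ?X = "seg x (?t (i - 1) + 1) (?t i)" and ?Y = "seg y 1 (?t j)"
    have PX: "?P @ ?X = seg x 1 (?t i)" by (rule seg_append[OF tim])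
    have lP: "length ?P = ?t (i - 1)" and lY: "length ?Y = ?t j" by (simp_all add: length_seg1 length_seg1')
    have a1: "KC W ?X (?P @ ?Y) \<le> KC W ?X ?P + 2 * lenC (?t j) + cR" using cR lY by metis
    have a2: "KC W ?X ?P + KP U ?P \<le> KP U (?P @ ?X) + 6 * lenC (KP U (?P @ ?X)) + 2 * lenC (?t (i - 1)) + cH" using cH lP by metis
    have a3: "KP U (?P @ ?X @ ?Y) \<le> KP U (?P @ ?Y) + KC W ?X (?P @ ?Y) + 2 * lenC (KP U (?P @ ?Y)) + 2 * lenC (?t (i - 1)) + c3" using c3 lP by metis
    have a4: "KP U (?P @ ?Y) \<le> KP U ?P + KP U ?Y + 2 * lenC (KP U ?P) + c2" using c2 by blast
    have a5: "real (KP U (?P @ ?X)) + real (KP U ?Y) - c0 * (1 + log 2 (real (?t i)) + log 2 (real (?t j))) \<le> real (KP U (?P @ ?X @ ?Y))"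
      using ind[OF ti1 tj1] PX by (metis append_assoc)
    have l1: "lenC (?t j) \<le> Lam" by (rule key) simp
    have l2': "KP U (?P @ ?X) \<le> ?t i + cU" unfolding PX using cU length_seg1 by metis
    have l2: "lenC (KP U (?P @ ?X)) \<le> Lam" by (rule key) (use l2' in linarith)
    have l3: "lenC (?t (i - 1)) \<le> Lam" using tim by (intro key) simp
    have l4: "lenC (KP U (?P @ ?Y)) \<le> Lam" using cU[rule_format, of "?P @ ?Y"] tim by (intro key) (simp add: length_seg1 length_seg1')
    have l5: "lenC (KP U ?P) \<le> Lam" using cU[rule_format, of "?P"] tim by (intro key) (simp add: length_seg1 length_seg1')
    have I0: "0 \<le> c0 * (1 + log 2 (real (?t i)) + log 2 (real (?t j)))"
      using c0pos ti1 tj1 by simp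
    have ua: "KC W ?X (?P @ ?Y) \<le> KC W ?X ?P + 2 * Lam + cR" using a1 l1 by linarith
    have a2': "KC W ?X ?P + KP U ?P \<le> KP U (?P @ ?X) + 8 * Lam + cH" using a2 l2 l3 by linarith
    have a3': "KP U (?P @ ?X @ ?Y) \<le> KP U (?P @ ?Y) + KC W ?X (?P @ ?Y) + 4 * Lam + c3" using a3 l4 l3 by linarith
    have a4': "KP U (?P @ ?Y) \<le> KP U ?P + KP U ?Y + 2 * Lam + c2" using a4 l5 by linarith
    have rua: "real (KC W ?X (?P @ ?Y)) \<le> real (KC W ?X ?P) + 2 * real Lam + real cR" using of_nat_mono[OF ua] by simp
    have ra2: "real (KC W ?X ?P) + real (KP U ?P) \<le> real (KP U (?P @ ?X)) + 8 * real Lam + real cH" using of_nat_mono[OF a2'] by simp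
    have ra3: "real (KP U (?P @ ?X @ ?Y)) \<le> real (KP U (?P @ ?Y)) + real (KC W ?X (?P @ ?Y)) + 4 * real Lam + real c3" using of_nat_mono[OF a3'] by simp
    have ra4: "real (KP U (?P @ ?Y)) \<le> real (KP U ?P) + real (KP U ?Y) + 2 * real Lam + real c2" using of_nat_mono[OF a4'] by simp
    have Lam0: "0 \<le> real Lam" by simp
    have "real (KC W ?X (?P @ ?Y)) - real (KC W ?X ?P) \<le> (C0 + C1) * real (i + j)"
      by (rule final) (use rua I0 Lam0 in linarith)
    moreover have "real (KC W ?X ?P) - real (KC W ?X (?P @ ?Y)) \<le> (C0 + C1) * real (i + j)"
      by (rule final) (use ra2 ra3 ra4 a5 I0 Lam0 in linarith)
    ultimately show "\<bar>real (KC W ?X (?P @ ?Y)) - real (KC W ?X ?P)\<bar> \<le> (C0 + C1) * real (i + j)"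
      by (simp add: abs_le_iff)
  next
    fix i j :: nat assume i: "1 \<le> i" and j: "1 \<le> j"
    let ?t = "tb a b"
    define s where "s = i + j"
    have s1: "1 \<le> real s" using i s_def by simp
    define Lam where "Lam = lenC ((2 * a + cU) * (b + 1) ^ s)"
    have LamB: "real Lam \<le> real K0 + real s * real K1"
    proof -
      have "Lam \<le> K0 + s * K1" unfolding Lam_def K0_def K1_def by (rule lenC_bound) simp
      then show ?thesis by (metis of_nat_add of_nat_mono of_nat_mult)
    qed
    have ti: "?t i \<le> a * (b + 1) ^ s" unfolding s_def by (rule tb_bound2)
    have tj: "?t j \<le> a * (b + 1) ^ s" unfolding s_def using tb_bound2[of a b j i] by (simp add: add.commute)
    have tim: "?t (i - 1) \<le> ?t i" by (rule tb_mono[OF b1 i])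
    have key: "\<And>N. N \<le> ?t i + ?t j + cU \<Longrightarrow> lenC N \<le> Lam"
    proof -
      fix N assume N: "N \<le> ?t i + ?t j + cU"
      have cUle: "cU \<le> cU * (b + 1) ^ s" by simp
      have e: "(2 * a + cU) * (b + 1) ^ s = a * (b + 1) ^ s + a * (b + 1) ^ s + cU * (b + 1) ^ s" by (simp add: algebra_simps)
      have "N \<le> a * (b + 1) ^ s + a * (b + 1) ^ s + cU * (b + 1) ^ s" using N ti tj cUle by linarith
      then have "N \<le> (2 * a + cU) * (b + 1) ^ s" using e by simp
      then show "lenC N \<le> Lam" unfolding Lam_def by (rule lenC_mono)
    qed
    have h1: "log 2 (real (?t i)) \<le> log 2 (real a) + real s * LB"
      using log_tb[OF a0 b1 i, of j] unfolding s_def LB_def .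
    have h2: "log 2 (real (?t j)) \<le> log 2 (real a) + real s * LB"
      using log_tb[OF a0 b1 j, of i] unfolding s_def LB_def by (metis add.commute)
    have la: "log 2 (real a) \<le> LA" unfolding LA_def by simp
    have logs: "log 2 (real (?t i)) + log 2 (real (?t j)) \<le> 2 * LA + 2 * (real s * LB)"
      using h1 h2 la by linarith
    have ti1: "1 \<le> ?t i" by (rule tb_pos[OF a0 b1 i])
    have tj1: "1 \<le> ?t j" by (rule tb_pos[OF a0 b1 j])
    have Ibound: "c0 * (1 + log 2 (real (?t i)) + log 2 (real (?t j))) \<le> c0 * (1 + 2 * LA) + 2 * c0 * LB * real s"
    proof -
      have "c0 * (1 + log 2 (real (?t i)) + log 2 (real (?t j))) \<le> c0 * (1 + 2 * LA + 2 * (real s * LB))"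
        using logs c0pos by (intro mult_left_mono) simp_all
      then show ?thesis by (simp add: algebra_simps)
    qed
    have final: "\<And>D. D \<le> 14 * real Lam + real cR + real cL + real cH + real c3 + real c2 + c0 * (1 + log 2 (real (?t i)) + log 2 (real (?t j)))
        \<Longrightarrow> D \<le> (C0 + C1) * real (i + j)"
    proof -
      fix D assume D: "D \<le> 14 * real Lam + real cR + real cL + real cH + real c3 + real c2 + c0 * (1 + log 2 (real (?t i)) + log 2 (real (?t j)))"
      have "14 * real Lam \<le> real (14 * K0) + real s * real (14 * K1)" using LamB by simp
      then have "D \<le> C0 + C1 * real s" using D Ibound unfolding C0_def C1_def by (simp add: algebra_simps)
      also have "C0 \<le> C0 * real s" using C0pos s1 by (simp add: mult_le_cancel_left1)
      finally show "D \<le> (C0 + C1) * real (i + j)" unfolding s_def by (simp add: algebra_simps)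
    qed
    let ?P = "seg y 1 (?t (i - 1))" and ?X = "seg y (?t (i - 1) + 1) (?t i)" and ?Q = "seg x 1 (?t j)"
    have PX: "?P @ ?X = seg y 1 (?t i)" by (rule seg_append[OF tim])
    have lP: "length ?P = ?t (i - 1)" and lQ: "length ?Q = ?t j" by (simp_all add: length_seg1 length_seg1')
    have b1': "KC W ?X (?Q @ ?P) \<le> KC W ?X ?P + 2 * lenC (?t j) + cL" using cL lQ by metis
    have b2: "KC W ?X ?P + KP U ?P \<le> KP U (?P @ ?X) + 6 * lenC (KP U (?P @ ?X)) + 2 * lenC (?t (i - 1)) + cH" using cH lP by metis
    have b3: "KP U (?Q @ ?P @ ?X) \<le> KP U (?Q @ ?P) + KC W ?X (?Q @ ?P) + 2 * lenC (KP U (?Q @ ?P)) + 2 * lenC (?t j + ?t (i - 1)) + c3"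
    proof -
      have "KP U ((?Q @ ?P) @ ?X @ []) \<le> KP U ((?Q @ ?P) @ []) + KC W ?X ((?Q @ ?P) @ []) + 2 * lenC (KP U ((?Q @ ?P) @ [])) + 2 * lenC (length (?Q @ ?P)) + c3"
        using c3 by blast
      then show ?thesis using lP lQ by simp
    qed
    have b4: "KP U (?Q @ ?P) \<le> KP U ?Q + KP U ?P + 2 * lenC (KP U ?Q) + c2" using c2 by blast
    have b5: "real (KP U ?Q) + real (KP U (?P @ ?X)) - c0 * (1 + log 2 (real (?t j)) + log 2 (real (?t i))) \<le> real (KP U (?Q @ ?P @ ?X))"
      using ind[OF tj1 ti1] PX by (metis append_assoc)
    have l1: "lenC (?t j) \<le> Lam" by (rule key) simp
    have l2': "KP U (?P @ ?X) \<le> ?t i + cU" unfolding PX using cU length_seg1 by metis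
    have l2: "lenC (KP U (?P @ ?X)) \<le> Lam" by (rule key) (use l2' in linarith)
    have l3: "lenC (?t (i - 1)) \<le> Lam" using tim by (intro key) simp
    have l4': "KP U (?Q @ ?P) \<le> ?t j + ?t (i - 1) + cU" using cU[rule_format, of "?Q @ ?P"] lP lQ by simp
    have l4: "lenC (KP U (?Q @ ?P)) \<le> Lam" by (rule key) (use l4' tim in linarith)
    have l5: "lenC (?t j + ?t (i - 1)) \<le> Lam" by (rule key) (use tim in linarith)
    have l6': "KP U ?Q \<le> ?t j + cU" using cU[rule_format, of "?Q"] lQ by simp
    have l6: "lenC (KP U ?Q) \<le> Lam" by (rule key) (use l6' in linarith)
    have I0: "0 \<le> c0 * (1 + log 2 (real (?t i)) + log 2 (real (?t j)))"
      using c0pos ti1 tj1 by simp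
    have comm: "c0 * (1 + log 2 (real (?t j)) + log 2 (real (?t i))) = c0 * (1 + log 2 (real (?t i)) + log 2 (real (?t j)))"
      by (simp add: add_ac)
    have ub: "KC W ?X (?Q @ ?P) \<le> KC W ?X ?P + 2 * Lam + cL" using b1' l1 by linarith
    have b2': "KC W ?X ?P + KP U ?P \<le> KP U (?P @ ?X) + 8 * Lam + cH" using b2 l2 l3 by linarith
    have b3': "KP U (?Q @ ?P @ ?X) \<le> KP U (?Q @ ?P) + KC W ?X (?Q @ ?P) + 4 * Lam + c3" using b3 l4 l5 by linarith
    have b4': "KP U (?Q @ ?P) \<le> KP U ?Q + KP U ?P + 2 * Lam + c2" using b4 l6 by linarith
    have rub: "real (KC W ?X (?Q @ ?P)) \<le> real (KC W ?X ?P) + 2 * real Lam + real cL" using of_nat_mono[OF ub] by simp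
    have rb2: "real (KC W ?X ?P) + real (KP U ?P) \<le> real (KP U (?P @ ?X)) + 8 * real Lam + real cH" using of_nat_mono[OF b2'] by simp
    have rb3: "real (KP U (?Q @ ?P @ ?X)) \<le> real (KP U (?Q @ ?P)) + real (KC W ?X (?Q @ ?P)) + 4 * real Lam + real c3" using of_nat_mono[OF b3'] by simp
    have rb4: "real (KP U (?Q @ ?P)) \<le> real (KP U ?Q) + real (KP U ?P) + 2 * real Lam + real c2" using of_nat_mono[OF b4'] by simp
    have Lam0: "0 \<le> real Lam" by simp
    have "real (KC W ?X (?Q @ ?P)) - real (KC W ?X ?P) \<le> (C0 + C1) * real (i + j)"
      by (rule final) (use rub I0 Lam0 in linarith)
    moreover have "real (KC W ?X ?P) - real (KC W ?X (?Q @ ?P)) \<le> (C0 + C1) * real (i + j)"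
      by (rule final) (use rb2 rb3 rb4 b5 I0 Lam0 comm in linarith)
    ultimately show "\<bar>real (KC W ?X (?Q @ ?P)) - real (KC W ?X ?P)\<bar> \<le> (C0 + C1) * real (i + j)"
      by (simp add: abs_le_iff)
  qed
qed

end
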